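(* Let $c$ be an oriented geodesic of $\mathbb{H}^2$ whose tail and head both lie in the limit set $\Lambda_{\Gamma_o}$. Let $(\ell_m)_{m\in\mathbb{Z}}$ be the leaves of $\mathcal{L}$ crossed by $c$, indexed in the order in which $c$ crosses them and each oriented so that $c$ crosses it from its right side to its left side, and suppose the indexing is chosen so that $\ell_0=\gamma_0e_0$ for some $\gamma_0\in\Gamma_o$. Then for every integer $n$, the oriented leaf $\ell_{2n}$ lies in the $\Gamma_o$-orbit of $e_0$; moreover, if $\gamma_n$ denotes the unique element of $\Gamma_o$ with $\ell_{2n}=\gamma_ne_0$, then $\gamma_{n+1}=\gamma_nw$ for some $w$ in $$W=\{R_*IR_*I,\ R_*IR_*^2I,\ R_*^2IR_*^2I,\ R_*^2IR_*I\}.$$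
   Context: Work in the upper half-plane model of $\mathbb{H}^2$. Let $\Delta_0$ be the ideal triangle with vertices $0,1,\infty$, $e_0$ the geodesic oriented from $\infty$ to $0$, and $I$ the order-2 rotation $z\mapsto-1/z$ (whose center lies on $e_0$). Let $\Delta$ be a hyperideal triangle (a region bounded by three pairwise disjoint geodesics with no common ideal endpoints) containing $\Delta_0$, having $e_0$ as a side, and invariant under an order-3 rotation $R_*$ that permutes its sides clockwise, chosen so that the orthogonal projection of the center of $R_*$ onto $e_0$ is the fixed point of $I$. Let $\Gamma=\langle I,R_*\rangle$ (a convex cocompact group isomorphic to $\mathrm{PSL}(2,\mathbb{Z})$), $\Gamma_o=\langle R_*,IR_*I\rangle$ its index-2 subgroup, and $\mathcal{L}$ the lamination formed by the $\Gamma$-images of the sides of $\Delta$; its leaves are geodesics, and $\Gamma_o$ acts simply transitively on unoriented leaves. Oriented leaves: the sides $R_*e_0$, $R_*^2e_0$ carry the orientations of the images of $e_0$. For an oriented geodesic, its left side is the half-plane on its left. *)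

theory Defs
  imports "HOL-Analysis.Analysis"
begin

text \<open>Points of the boundary circle of the upper half-plane: \<infinity> or a real number.\<close>
datatype bpt = Inf | Fin real

text \<open>Oriented geodesics are given by (tail, head) of distinct ideal endpoints.\<close>
type_synonym ogeod = "bpt \<times> bpt"

definition mat2 :: "real \<Rightarrow> real \<Rightarrow> real \<Rightarrow> real \<Rightarrow> real^2^2" where
  "mat2 a b c d = vector [vector [a, b], vector [c, d]]"

text \<open>Inverse of a matrix of determinant 1 (adjugate).\<close>
definition inv2 :: "real^2^2 \<Rightarrow> real^2^2" where
  "inv2 M = mat2 (M$2$2) (- (M$1$2)) (- (M$2$1)) (M$1$1)"

text \<open>Equality in PSL(2,R).\<close>
definition psl_eq :: "real^2^2 \<Rightarrow> real^2^2 \<Rightarrow> bool" where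
  "psl_eq M N \<longleftrightarrow> M = N \<or> M = - N"

definition moeb :: "real^2^2 \<Rightarrow> complex \<Rightarrow> complex" where
  "moeb M z = (of_real (M$1$1) * z + of_real (M$1$2)) / (of_real (M$2$1) * z + of_real (M$2$2))"

definition bact :: "real^2^2 \<Rightarrow> bpt \<Rightarrow> bpt" where
  "bact M \<xi> = (case \<xi> of
      Inf \<Rightarrow> (if M$2$1 \<noteq> 0 then Fin (M$1$1 / M$2$1) else Inf)
    | Fin x \<Rightarrow> (if M$2$1 * x + M$2$2 \<noteq> 0
                then Fin ((M$1$1 * x + M$1$2) / (M$2$1 * x + M$2$2)) else Inf))"

definition gact :: "real^2^2 \<Rightarrow> ogeod \<Rightarrow> ogeod" where
  "gact M g = (bact M (fst g), bact M (snd g))"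

text \<open>Subgroup of SL(2,R) generated by a set S (S is assumed closed under inverses).\<close>
inductive_set gen_group :: "(real^2^2) set \<Rightarrow> (real^2^2) set" for S where
  one: "mat 1 \<in> gen_group S"
| step: "s \<in> S \<Longrightarrow> M \<in> gen_group S \<Longrightarrow> s ** M \<in> gen_group S"

definition geod :: "ogeod \<Rightarrow> complex set" where
  "geod g = {z. Im z > 0 \<and> (case g of
      (Fin t, Fin h) \<Rightarrow> t \<noteq> h \<and> cmod (z - of_real ((t + h) / 2)) = \<bar>t - h\<bar> / 2
    | (Inf, Fin x) \<Rightarrow> Re z = x
    | (Fin x, Inf) \<Rightarrow> Re z = x
    | _ \<Rightarrow> False)}"

definition lside :: "ogeod \<Rightarrow> complex set" where
  "lside g = {z. Im z > 0 \<and> (case g of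
      (Fin t, Fin h) \<Rightarrow> t \<noteq> h \<and> (h - t) * Re ((z - of_real t) / (z - of_real h)) > 0
    | (Inf, Fin x) \<Rightarrow> Re z > x
    | (Fin x, Inf) \<Rightarrow> Re z < x
    | _ \<Rightarrow> False)}"

definition cl_lside :: "ogeod \<Rightarrow> complex set" where
  "cl_lside g = lside g \<union> geod g"

definition bleft :: "ogeod \<Rightarrow> bpt \<Rightarrow> bool" where
  "bleft g \<xi> = (case g of
      (Fin t, Fin h) \<Rightarrow> t \<noteq> h \<and> (case \<xi> of Inf \<Rightarrow> h > t | Fin y \<Rightarrow> (h - t) * ((y - t) / (y - h)) > 0)
    | (Inf, Fin x) \<Rightarrow> (case \<xi> of Fin y \<Rightarrow> y > x | Inf \<Rightarrow> False)
    | (Fin x, Inf) \<Rightarrow> (case \<xi> of Fin y \<Rightarrow> y < x | Inf \<Rightarrow> False)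
    | _ \<Rightarrow> False)"

definition crosses_RL :: "ogeod \<Rightarrow> ogeod \<Rightarrow> bool" where
  "crosses_RL c l \<longleftrightarrow> bleft l (snd c) \<and> bleft (snd l, fst l) (fst c)"

text \<open>A parameter increasing strictly along c from its tail to its head
  (modulus of the normalising Moebius map sending tail to 0, head to \<infinity>).\<close>
definition pos :: "ogeod \<Rightarrow> complex \<Rightarrow> real" where
  "pos c z = (case c of
      (Fin t, Fin h) \<Rightarrow> cmod (z - of_real t) / cmod (z - of_real h)
    | (Inf, Fin h) \<Rightarrow> 1 / cmod (z - of_real h)
    | (Fin t, Inf) \<Rightarrow> cmod (z - of_real t)
    | _ \<Rightarrow> 0)"

definition hdist :: "complex \<Rightarrow> complex \<Rightarrow> real" where
  "hdist z w = arcosh (1 + (cmod (z - w))\<^sup>2 / (2 * Im z * Im w))"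

definition disjoint_geods :: "ogeod \<Rightarrow> ogeod \<Rightarrow> bool" where
  "disjoint_geods g1 g2 \<longleftrightarrow> geod g1 \<inter> geod g2 = {} \<and> {fst g1, snd g1} \<inter> {fst g2, snd g2} = {}"

definition Imat :: "real^2^2" where "Imat = mat2 0 (-1) 1 0"

definition e0 :: ogeod where "e0 = (Inf, Fin 0)"

text \<open>The ideal triangle with vertices 0, 1, \<infinity> (closed, in H^2).\<close>
definition Delta0 :: "complex set" where
  "Delta0 = {z. Im z > 0 \<and> 0 \<le> Re z \<and> Re z \<le> 1 \<and> cmod (z - 1/2) \<ge> 1/2}"

definition side1 :: "real^2^2 \<Rightarrow> ogeod" where "side1 R = gact R e0"
definition side2 :: "real^2^2 \<Rightarrow> ogeod" where "side2 R = gact (R ** R) e0"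

definition Delta :: "real^2^2 \<Rightarrow> complex set" where
  "Delta R = {z. Im z > 0} \<inter> cl_lside e0 \<inter> cl_lside (side1 R) \<inter> cl_lside (side2 R)"

text \<open>R is an admissible choice of R_*: clockwise rotation by 2 pi / 3 about a
  centre whose orthogonal projection to e_0 is i, with Delta a hyperideal triangle
  containing Delta_0 and invariant under R.\<close>
definition admissible_R :: "real^2^2 \<Rightarrow> bool" where
  "admissible_R R \<longleftrightarrow> det R = 1
    \<and> (\<exists>p. Im p > 0 \<and> moeb R p = p
          \<and> (moeb R has_field_derivative cis (- 2 * pi / 3)) (at p)
          \<and> (\<forall>y>0. y \<noteq> 1 \<longrightarrow> hdist p \<i> < hdist p (\<i> * of_real y)))
    \<and> disjoint_geods e0 (side1 R) \<and> disjoint_geods e0 (side2 R)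
    \<and> disjoint_geods (side1 R) (side2 R)
    \<and> Delta0 \<subseteq> Delta R
    \<and> moeb R ` Delta R = Delta R"

definition Gamma :: "real^2^2 \<Rightarrow> (real^2^2) set" where
  "Gamma R = gen_group {Imat, inv2 Imat, R, inv2 R}"

definition Gamma_o :: "real^2^2 \<Rightarrow> (real^2^2) set" where
  "Gamma_o R = gen_group {R, inv2 R, Imat ** R ** Imat, inv2 (Imat ** R ** Imat)}"

definition oleaves :: "real^2^2 \<Rightarrow> ogeod set" where
  "oleaves R = {gact g s | g s. g \<in> Gamma R \<and> s \<in> {e0, side1 R, side2 R}}
             \<union> {prod.swap (gact g s) | g s. g \<in> Gamma R \<and> s \<in> {e0, side1 R, side2 R}}"

definition limset :: "(real^2^2) set \<Rightarrow> bpt set" where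
  "limset G = {\<xi>. case \<xi> of
      Fin x \<Rightarrow> of_real x \<in> closure ((\<lambda>g. moeb g \<i>) ` G)
    | Inf \<Rightarrow> \<not> bounded ((\<lambda>g. moeb g \<i>) ` G)}"

definition Wset :: "real^2^2 \<Rightarrow> (real^2^2) set" where
  "Wset R = {R ** Imat ** R ** Imat, R ** Imat ** (R ** R) ** Imat,
             (R ** R) ** Imat ** (R ** R) ** Imat, (R ** R) ** Imat ** R ** Imat}"

end

theory Submission
  imports Defs
begin


lemma mm_ent: "(A ** B)$i$j = A$i$1 * B$1$j + A$i$2 * B$2$j"
  for A B :: "real^2^2"
  by (simp add: matrix_matrix_mult_def sum_2)

lemma mat2_ent[simp]: "(mat2 a b c d)$1$1 = a" "(mat2 a b c d)$1$2 = b"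
   "(mat2 a b c d)$2$1 = c" "(mat2 a b c d)$2$2 = d"
  by (simp_all add: mat2_def)

lemma mat1_ent[simp]: "(mat 1::real^2^2)$1$1 = 1" "(mat 1::real^2^2)$1$2 = 0"
   "(mat 1::real^2^2)$2$1 = 0" "(mat 1::real^2^2)$2$2 = 1"
  by (simp_all add: mat_def)

lemma mat_eq: "(M = N) \<longleftrightarrow> M$1$1 = N$1$1 \<and> M$1$2 = N$1$2 \<and> M$2$1 = N$2$1 \<and> M$2$2 = N$2$2"
  for M N :: "real^2^2"
  by (auto simp: vec_eq_iff forall_2)

lemma det2: "det M = M$1$1 * M$2$2 - M$1$2 * M$2$1" for M :: "real^2^2"
  by (rule det_2)

type_synonym rv = "real \<times> real"

fun bv :: "bpt \<Rightarrow> rv" where "bv Inf = (1,0)" | "bv (Fin x) = (x,1)"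
fun dt :: "rv \<Rightarrow> rv \<Rightarrow> real" where "dt (a,b) (c,d) = a*d - b*c"
definition mv :: "real^2^2 \<Rightarrow> rv \<Rightarrow> rv" where
  "mv M u = (M$1$1* (fst u) + M$1$2* (snd u), M$2$1* (fst u) + M$2$2* (snd u))"
definition sc :: "real \<Rightarrow> rv \<Rightarrow> rv" where "sc k u = (k* (fst u), k* (snd u))"
fun vinv :: "rv \<Rightarrow> bpt" where "vinv (x,y) = (if y \<noteq> 0 then Fin (x/y) else Inf)"

lemma bact_vinv: "bact M \<xi> = vinv (mv M (bv \<xi>))"
  by (cases \<xi>) (auto simp: bact_def mv_def)

lemma vinv_sc: "k \<noteq> 0 \<Longrightarrow> vinv (sc k u) = vinv u"
  by (cases u) (auto simp: sc_def)

lemma bv_vinv: "u \<noteq> (0,0) \<Longrightarrow> \<exists>k. k \<noteq> 0 \<and> bv (vinv u) = sc k u"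
proof (cases u)
  case (Pair x y)
  assume u: "u \<noteq> (0,0)"
  show ?thesis
  proof (cases "y = 0")
    case True
    then have "x \<noteq> 0" using u Pair by auto
    then show ?thesis using True Pair by (intro exI[of _ "1/x"]) (auto simp: sc_def)
  next
    case False
    then show ?thesis using Pair by (intro exI[of _ "1/y"]) (auto simp: sc_def)
  qed
qed

lemma vinv_bv[simp]: "vinv (bv \<xi>) = \<xi>"
  by (cases \<xi>) auto

lemma bv_nz[simp]: "bv \<xi> \<noteq> (0,0)"
  by (cases \<xi>) auto

lemma mv_mm: "mv (A ** B) u = mv A (mv B u)"
  by (simp add: mv_def mm_ent algebra_simps)

lemma mv_sc: "mv M (sc k u) = sc k (mv M u)"
  by (simp add: mv_def sc_def algebra_simps)

lemma dt_sc: "dt (sc a u) (sc b v) = a*b*dt u v"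
  by (cases u; cases v) (simp add: sc_def algebra_simps)

lemma dt_mv: "dt (mv M u) (mv M v) = det M * dt u v"
  by (cases u; cases v) (simp add: mv_def det2 algebra_simps)

lemma dt_swap: "dt u v = - dt v u"
  by (cases u; cases v) simp

lemma mv_nz: "det M \<noteq> 0 \<Longrightarrow> u \<noteq> (0,0) \<Longrightarrow> mv M u \<noteq> (0,0)"
proof
  assume d: "det M \<noteq> 0" and u: "u \<noteq> (0,0)" and m: "mv M u = (0,0)"
  obtain x y where u': "u = (x,y)" by (cases u)
  have e1: "M$1$1*x + M$1$2*y = 0" and e2: "M$2$1*x + M$2$2*y = 0" using m u' by (auto simp: mv_def)
  have "det M * x = M$2$2*(M$1$1*x+M$1$2*y) - M$1$2*(M$2$1*x+M$2$2*y)" by (simp add: det2 algebra_simps)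
  then have "det M * x = 0" using e1 e2 by simp
  moreover have "det M * y = M$1$1*(M$2$1*x+M$2$2*y) - M$2$1*(M$1$1*x+M$1$2*y)" by (simp add: det2 algebra_simps)
  then have "det M * y = 0" using e1 e2 by simp
  ultimately show False using d u u' by auto
qed

lemma bv_bact: "det M \<noteq> 0 \<Longrightarrow> \<exists>k. k \<noteq> 0 \<and> bv (bact M \<xi>) = sc k (mv M (bv \<xi>))"
  unfolding bact_vinv by (rule bv_vinv, rule mv_nz) auto

lemma bact_mm: "det B \<noteq> 0 \<Longrightarrow> bact (A ** B) \<xi> = bact A (bact B \<xi>)"
proof -
  assume "det B \<noteq> 0"
  then obtain k where k: "k \<noteq> 0" "bv (bact B \<xi>) = sc k (mv B (bv \<xi>))" using bv_bact by blast
  show ?thesis unfolding bact_vinv[of A] k(2) mv_sc vinv_sc[OF k(1)]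
    by (simp add: bact_vinv mv_mm)
qed

lemma bact_neg: "bact (- M) \<xi> = bact M \<xi>"
proof -
  have "mv (- M) u = sc (-1) (mv M u)" for u by (simp add: mv_def sc_def)
  then show ?thesis by (simp add: bact_vinv vinv_sc)
qed

lemma bact_one[simp]: "bact (mat 1) \<xi> = \<xi>"
  by (cases \<xi>) (auto simp: bact_def)

definition bl :: "rv \<Rightarrow> rv \<Rightarrow> rv \<Rightarrow> bool" where
  "bl u v w \<longleftrightarrow> dt v u * dt u w * dt v w > 0"

lemma sign3: "(h - t) * (y - t) / (y - h) > 0 \<longleftrightarrow> (h - t) * (t - y) * (h - y) > (0::real)"
proof (cases "y = h")
  case True then show ?thesis by simp
next
  case False
  have "(h - t) * (y - t) / (y - h) = ((h - t) * (t - y) * (h - y)) / (y - h)^2"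
  proof -
    have nz: "y - h \<noteq> 0" using False by simp
    have eq: "(h - t) * (t - y) * (h - y) = ((h - t) * (y - t)) * (y - h)" by (simp add: algebra_simps)
    have "((h - t) * (t - y) * (h - y)) / (y - h)^2 = (((h - t) * (y - t)) * (y - h)) / ((y - h) * (y - h))"
      by (simp only: power2_eq_square eq)
    also have "\<dots> = (h - t) * (y - t) / (y - h)" using nz by (rule mult_divide_mult_cancel_right)
    finally show ?thesis by simp
  qed
  moreover have "(y - h)^2 > 0" using False by simp
  ultimately show ?thesis
    by (simp add: zero_less_divide_iff)
qed

lemma bleft_bv: "bleft g \<xi> \<longleftrightarrow> bl (bv (fst g)) (bv (snd g)) (bv \<xi>)"
proof -
  obtain a b where g: "g = (a,b)" by (cases g)
  show ?thesis
    unfolding g bl_def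
    apply (cases a; cases b; cases \<xi>)
    apply (auto simp: bleft_def sign3)
    done
qed

lemma bl_sc: "a \<noteq> 0 \<Longrightarrow> b \<noteq> 0 \<Longrightarrow> c \<noteq> 0 \<Longrightarrow> bl (sc a u) (sc b v) (sc c w) = bl u v w"
proof -
  assume nz: "a \<noteq> 0" "b \<noteq> 0" "c \<noteq> 0"
  have e: "dt (sc b v) (sc a u) * dt (sc a u) (sc c w) * dt (sc b v) (sc c w)
      = (a*b*c)^2 * (dt v u * dt u w * dt v w)"
    by (simp add: dt_sc power2_eq_square algebra_simps)
  have "(a*b*c)^2 > 0" using nz by simp
  then show ?thesis unfolding bl_def e by (simp add: zero_less_mult_iff)
qed

lemma bl_mv: "det M > 0 \<Longrightarrow> bl (mv M u) (mv M v) (mv M w) = bl u v w"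
proof -
  assume d: "det M > 0"
  have e: "dt (mv M v) (mv M u) * dt (mv M u) (mv M w) * dt (mv M v) (mv M w)
      = det M ^ 3 * (dt v u * dt u w * dt v w)"
    by (simp add: dt_mv power3_eq_cube algebra_simps)
  have "det M ^ 3 > 0" using d by simp
  then show ?thesis unfolding bl_def e by (simp add: zero_less_mult_iff)
qed

lemma bleft_gact: "det M > 0 \<Longrightarrow> bleft (gact M g) (bact M \<xi>) = bleft g \<xi>"
proof -
  assume d: "det M > 0"
  then have d0: "det M \<noteq> 0" by simp
  obtain k1 where k1: "k1 \<noteq> 0" "bv (bact M (fst g)) = sc k1 (mv M (bv (fst g)))" using bv_bact[OF d0] by blast
  obtain k2 where k2: "k2 \<noteq> 0" "bv (bact M (snd g)) = sc k2 (mv M (bv (snd g)))" using bv_bact[OF d0] by blast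
  obtain k3 where k3: "k3 \<noteq> 0" "bv (bact M \<xi>) = sc k3 (mv M (bv \<xi>))" using bv_bact[OF d0] by blast
  show ?thesis unfolding bleft_bv gact_def fst_conv snd_conv k1(2) k2(2) k3(2)
      bl_sc[OF k1(1) k2(1) k3(1)] bl_mv[OF d] ..
qed

lemma gact_swap: "gact M (prod.swap g) = prod.swap (gact M g)"
  by (simp add: gact_def)

lemma gact_mm: "det B \<noteq> 0 \<Longrightarrow> gact (A ** B) g = gact A (gact B g)"
  by (simp add: gact_def bact_mm)

lemma gact_neg: "gact (- M) g = gact M g"
  by (simp add: gact_def bact_neg)

lemma gact_one[simp]: "gact (mat 1) g = g"
  by (simp add: gact_def)

definition dc :: "rv \<Rightarrow> complex \<Rightarrow> complex" where
  "dc u z = of_real (fst u) - of_real (snd u) * z"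
definition Qf :: "rv \<Rightarrow> rv \<Rightarrow> complex \<Rightarrow> real" where
  "Qf u v z = Re (dc u z * cnj (dc v z))"
definition FF :: "rv \<Rightarrow> rv \<Rightarrow> complex \<Rightarrow> real" where
  "FF u v z = dt v u * Qf u v z"

lemma Qf_comm: "Qf u v z = Qf v u z"
  by (simp add: Qf_def dc_def algebra_simps)

lemma Qf_ri: "Qf (t,1) (h,1) z = (t - Re z) * (h - Re z) + (Im z)^2"
  by (simp add: Qf_def dc_def power2_eq_square algebra_simps)

lemma lside_bv: "z \<in> lside g \<longleftrightarrow> Im z > 0 \<and> FF (bv (fst g)) (bv (snd g)) z > 0"
proof -
  obtain a b where g: "g = (a,b)" by (cases g)
  show ?thesis
  proof (cases a; cases b)
    fix t h assume ab: "a = Fin t" "b = Fin h"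
    show ?thesis
    proof (cases "Im z > 0")
      case True
      have "Re ((z - of_real t) / (z - of_real h)) = ((t - Re z) * (h - Re z) + (Im z)^2) / ((Re z - h)^2 + (Im z)^2)"
        by (simp add: Re_divide power2_eq_square algebra_simps)
      moreover have "(Re z - h)^2 + (Im z)^2 > 0" using True by (simp add: add_nonneg_pos)
      ultimately have "(h - t) * Re ((z - of_real t) / (z - of_real h)) > 0 \<longleftrightarrow> (h - t) * ((t - Re z) * (h - Re z) + (Im z)^2) > 0"
        by (simp add: zero_less_mult_iff zero_less_divide_iff)
      then show ?thesis using True unfolding g ab
        by (auto simp: lside_def FF_def Qf_ri)
    qed (auto simp: lside_def g ab)
  qed (auto simp: lside_def g FF_def Qf_def dc_def)
qed

lemma geod_bv: "z \<in> geod g \<longleftrightarrow> Im z > 0 \<and> dt (bv (snd g)) (bv (fst g)) \<noteq> 0 \<and> Qf (bv (fst g)) (bv (snd g)) z = 0"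
proof -
  obtain a b where g: "g = (a,b)" by (cases g)
  show ?thesis
  proof (cases a; cases b)
    fix t h assume ab: "a = Fin t" "b = Fin h"
    have "cmod (z - of_real ((t + h) / 2)) = \<bar>t - h\<bar> / 2 \<longleftrightarrow> (cmod (z - of_real ((t + h) / 2)))^2 = (\<bar>t - h\<bar> / 2)^2"
      by (rule power2_eq_iff_nonneg[symmetric]) auto
    also have "\<dots> \<longleftrightarrow> (t - Re z) * (h - Re z) + (Im z)^2 = 0"
      unfolding cmod_power2 by (simp add: power2_eq_square field_simps) (auto simp: algebra_simps)
    finally show ?thesis unfolding g ab
      by (auto simp: geod_def Qf_ri)
  qed (auto simp: geod_def g Qf_def dc_def)
qed

lemma Re_mr: "Re (w * of_real r) = Re w * r"
  by simp

lemma FF_swap: "FF v u z = - FF u v z"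
  by (simp add: FF_def Qf_comm[of v u] dt_swap[of u v])

lemma dcE: "dc u z * of_real (dt p q) = dc p z * of_real (dt u q) - dc q z * of_real (dt u p)"
  by (cases u; cases p; cases q) (simp add: dc_def algebra_simps)

lemma expand4: "Re ((P * of_real a - Q * of_real b) * cnj (P * of_real c - Q * of_real d))
   = b * d * (cmod Q)^2 + a * c * (cmod P)^2 - (b * c + a * d) * Re (P * cnj Q)"
  unfolding cmod_power2 by (simp add: power2_eq_square algebra_simps)

lemma I1: "(dt p q)^2 * Qf u v z = dt u p * dt v p * (cmod (dc q z))^2 + dt u q * dt v q * (cmod (dc p z))^2
    - (dt u p * dt v q + dt u q * dt v p) * Qf p q z"
proof -
  have "(dt p q)^2 * Qf u v z = Re ((dc u z * of_real (dt p q)) * cnj (dc v z * of_real (dt p q)))"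
  proof -
    have "dc u z * of_real (dt p q) * cnj (dc v z * of_real (dt p q)) = (dc u z * cnj (dc v z)) * of_real ((dt p q)^2)"
      by (simp add: power2_eq_square mult_ac)
    then have "Re (dc u z * of_real (dt p q) * cnj (dc v z * of_real (dt p q))) = Re (dc u z * cnj (dc v z)) * (dt p q)^2"
      by (metis Re_mr of_real_power)
    then show ?thesis by (simp add: Qf_def mult.commute)
  qed
  also have "\<dots> = Re ((dc p z * of_real (dt u q) - dc q z * of_real (dt u p)) * cnj (dc p z * of_real (dt v q) - dc q z * of_real (dt v p)))"
    unfolding dcE[of u z p q] dcE[of v z p q] ..
  also have "\<dots> = dt u p * dt v p * (cmod (dc q z))^2 + dt u q * dt v q * (cmod (dc p z))^2
    - (dt u p * dt v q + dt u q * dt v p) * Qf p q z"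
    unfolding Qf_def by (rule expand4)
  finally show ?thesis .
qed

lemma dc_nz: "Im z > 0 \<Longrightarrow> u \<noteq> (0,0) \<Longrightarrow> dc u z \<noteq> 0"
  by (cases u) (auto simp: dc_def complex_eq_iff)

lemma geod_in_lside:
  assumes z: "z \<in> geod g" and l1: "bleft G (fst g)" and l2: "bleft G (snd g)"
  shows "z \<in> lside G"
proof -
  define p where "p = bv (fst g)"
  define q where "q = bv (snd g)"
  define u where "u = bv (fst G)"
  define v where "v = bv (snd G)"
  have zz: "Im z > 0" "dt q p \<noteq> 0" "Qf p q z = 0" using z by (auto simp: geod_bv p_def q_def)
  have a: "dt v u * dt u p * dt v p > 0" using l1 by (simp add: bleft_bv bl_def u_def v_def p_def)
  have b: "dt v u * dt u q * dt v q > 0" using l2 by (simp add: bleft_bv bl_def u_def v_def q_def)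
  have P: "(cmod (dc p z))^2 > 0" and Q: "(cmod (dc q z))^2 > 0" using dc_nz zz(1) by (auto simp: p_def q_def)
  have "(dt p q)^2 * FF u v z = dt v u * ((dt p q)^2 * Qf u v z)"
    unfolding FF_def by simp
  also have "\<dots> = (dt v u * dt u p * dt v p) * (cmod (dc q z))^2 + (dt v u * dt u q * dt v q) * (cmod (dc p z))^2"
    unfolding I1 zz(3) by (simp add: algebra_simps)
  finally have e: "(dt p q)^2 * FF u v z = (dt v u * dt u p * dt v p) * (cmod (dc q z))^2 + (dt v u * dt u q * dt v q) * (cmod (dc p z))^2" .
  have "(dt v u * dt u p * dt v p) * (cmod (dc q z))^2 + (dt v u * dt u q * dt v q) * (cmod (dc p z))^2 > 0"
    using a b P Q by (simp add: add_pos_pos)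
  then have "(dt p q)^2 * FF u v z > 0" using e by simp
  then have "FF u v z > 0" by (simp add: zero_less_mult_iff)
  then show ?thesis using zz(1) by (simp add: lside_bv u_def v_def)
qed

lemma pos_dc: "fst c \<noteq> snd c \<Longrightarrow> pos c z = cmod (dc (bv (fst c)) z) / cmod (dc (bv (snd c)) z)"
proof -
  assume ne: "fst c \<noteq> snd c"
  obtain a b where c: "c = (a,b)" by (cases c)
  show ?thesis using ne unfolding c
    by (cases a; cases b) (auto simp: pos_def dc_def norm_minus_commute)
qed

lemma FF_along:
  assumes z: "z \<in> geod c" and ne: "fst c \<noteq> snd c"
  shows "\<exists>K>0. FF u v z = K * (dt v u * dt u (bv (fst c)) * dt v (bv (fst c))
                + dt v u * dt u (bv (snd c)) * dt v (bv (snd c)) * (pos c z)^2)"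
proof -
  define p where "p = bv (fst c)"
  define q where "q = bv (snd c)"
  have zz: "Im z > 0" "dt q p \<noteq> 0" "Qf p q z = 0" using z by (auto simp: geod_bv p_def q_def)
  have pq: "dt p q \<noteq> 0" using zz(2) dt_swap[of q p] by simp
  have Q: "cmod (dc q z) > 0" using dc_nz zz(1) by (auto simp: q_def)
  have ps: "(pos c z)^2 * (cmod (dc q z))^2 = (cmod (dc p z))^2"
    using Q unfolding pos_dc[OF ne] p_def[symmetric] q_def[symmetric] by (simp add: power_divide)
  define K where "K = (cmod (dc q z))^2 / (dt p q)^2"
  have K: "K > 0" using Q pq by (simp add: K_def)
  have "(dt p q)^2 * FF u v z = dt v u * ((dt p q)^2 * Qf u v z)"
    unfolding FF_def by simp
  also have "\<dots> = (dt v u * dt u p * dt v p) * (cmod (dc q z))^2 + (dt v u * dt u q * dt v q) * ((pos c z)^2 * (cmod (dc q z))^2)"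
    unfolding I1 zz(3) ps by (simp add: algebra_simps)
  finally have "(dt p q)^2 * FF u v z = (cmod (dc q z))^2 * (dt v u * dt u p * dt v p + dt v u * dt u q * dt v q * (pos c z)^2)"
    by (simp add: algebra_simps)
  then have "FF u v z = K * (dt v u * dt u p * dt v p + dt v u * dt u q * dt v q * (pos c z)^2)"
    using pq by (simp add: K_def field_simps)
  then show ?thesis using K unfolding p_def q_def by blast
qed

lemma dt_bv: "dt (bv \<xi>) (bv \<eta>) = 0 \<longleftrightarrow> \<xi> = \<eta>"
  by (cases \<xi>; cases \<eta>) auto

lemma meet_exists:
  fixes p q u v :: rv
  assumes pq: "dt p q \<noteq> 0" and vu: "dt v u \<noteq> 0"
    and A: "dt v u * dt u p * dt v p < 0" and B: "dt v u * dt u q * dt v q > 0"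
  shows "\<exists>z. Im z > 0 \<and> Qf p q z = 0 \<and> Qf u v z = 0"
proof -
  obtain p1 p2 where p: "p = (p1,p2)" by (cases p)
  obtain q1 q2 where q: "q = (q1,q2)" by (cases q)
  define r where "r = - (dt v u * dt u p * dt v p) / (dt v u * dt u q * dt v q)"
  have r: "r > 0" unfolding r_def using A B by (intro divide_pos_pos) linarith+
  define s where "s = (if dt q p > 0 then sqrt r else - sqrt r)"
  have s2: "s^2 = r" using r by (simp add: s_def)
  have sq: "s * dt q p > 0" using r pq dt_swap[of p q] by (auto simp: s_def mult_neg_neg mult_pos_neg)
  define den where "den = complex_of_real p2 + \<i> * of_real (s * q2)"
  define num where "num = complex_of_real p1 + \<i> * of_real (s * q1)"
  have den: "den \<noteq> 0"
  proof
    assume "den = 0"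
    then have "p2 = 0" "s * q2 = 0" by (auto simp: den_def complex_eq_iff)
    then show False using sq p q by auto
  qed
  define z where "z = num / den"
  have dp: "dc p z = \<i> * of_real (s * dt p q) / den"
    using den unfolding z_def p q by (simp add: dc_def field_simps num_def den_def algebra_simps)
  have dq: "dc q z = of_real (dt q p) / den"
    using den unfolding z_def p q by (simp add: dc_def field_simps num_def den_def algebra_simps)
  have dd: "(cmod den)^2 > 0" using den by simp
  have imz: "Im z = s * dt q p / (cmod den)^2"
    unfolding z_def num_def den_def p q cmod_power2 by (simp add: Im_divide algebra_simps)
  have "Im z > 0" unfolding imz using sq dd by simp
  moreover have "Qf p q z = 0"
    unfolding Qf_def dp dq by (simp add: Re_divide)
  moreover have "Qf u v z = 0"
  proof -
    have cP: "(cmod (dc p z))^2 = s^2 * (dt p q)^2 / (cmod den)^2"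
      unfolding dp by (simp add: norm_mult norm_divide power_divide power_mult_distrib)
    have cQ: "(cmod (dc q z))^2 = (dt q p)^2 / (cmod den)^2"
      unfolding dq by (simp add: norm_divide power_divide)
    have "(dt p q)^2 * Qf u v z = dt u p * dt v p * (cmod (dc q z))^2 + dt u q * dt v q * (cmod (dc p z))^2"
      using I1[of p q u v z] \<open>Qf p q z = 0\<close> by simp
    also have "\<dots> = (dt p q)^2 / (cmod den)^2 * (dt u p * dt v p + r * (dt u q * dt v q))"
      unfolding cP cQ s2 using dt_swap[of q p] den by (simp add: power2_eq_square field_simps)
    also have "dt u p * dt v p + r * (dt u q * dt v q) = 0"
    proof -
      have "dt u q \<noteq> 0" "dt v q \<noteq> 0" using B by auto
      then show ?thesis using vu by (simp add: r_def field_simps)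
    qed
    finally have "(dt p q)^2 * Qf u v z = 0" by simp
    then show ?thesis using pq by simp
  qed
  ultimately show ?thesis by blast
qed

lemma cross_meet:
  assumes h: "bleft L (snd c)" and t: "bleft (prod.swap L) (fst c)"
  shows "\<exists>z. z \<in> geod c \<and> z \<in> geod L"
proof -
  define p where "p = bv (fst c)"
  define q where "q = bv (snd c)"
  define u where "u = bv (fst L)"
  define v where "v = bv (snd L)"
  have B: "dt v u * dt u q * dt v q > 0" using h by (simp add: bleft_bv bl_def u_def v_def q_def)
  have A': "dt u v * dt v p * dt u p > 0" using t by (simp add: bleft_bv bl_def u_def v_def p_def)
  have A: "dt v u * dt u p * dt v p < 0" using A' dt_swap[of u v] by (simp add: algebra_simps)
  have vu: "dt v u \<noteq> 0" using B by auto
  have ne: "fst c \<noteq> snd c" using A B unfolding p_def q_def by (auto simp: algebra_simps)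
  have pq: "dt p q \<noteq> 0" using ne dt_bv unfolding p_def q_def by auto
  obtain z where z: "Im z > 0" "Qf p q z = 0" "Qf u v z = 0" using meet_exists[OF pq vu A B] by blast
  have "z \<in> geod c" using z pq dt_swap[of q p] by (simp add: geod_bv p_def q_def)
  moreover have "z \<in> geod L" using z vu by (simp add: geod_bv u_def v_def)
  ultimately show ?thesis by blast
qed

lemma dc_sc: "dc (sc a u) z = of_real a * dc u z"
  by (simp add: dc_def sc_def algebra_simps)

lemma Qf_sc: "Qf (sc a u) (sc b v) z = a * b * Qf u v z"
  by (simp add: Qf_def dc_sc algebra_simps)

lemma moeb_den: "Im z > 0 \<Longrightarrow> det M \<noteq> 0 \<Longrightarrow> of_real (M$2$1) * z + of_real (M$2$2) \<noteq> 0"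
  for M :: "real^2^2"
proof
  assume z: "Im z > 0" and d: "det M \<noteq> 0" and e: "of_real (M$2$1) * z + of_real (M$2$2) = 0"
  then have "M$2$1 * Im z = 0" "M$2$1 * Re z + M$2$2 = 0" by (auto simp: complex_eq_iff)
  then have "M$2$1 = 0" "M$2$2 = 0" using z by auto
  then show False using d by (simp add: det2)
qed

lemma moeb_gen:
  fixes A B C D U1 U2 z :: complex
  assumes n: "C*z + D \<noteq> 0" and d: "A*D - B*C = 1"
  shows "(A*U1 + B*U2) - (C*U1 + D*U2) * ((A*z+B)/(C*z+D)) = (U1 - U2*z)/(C*z+D)"
proof -
  have e: "(A*U1 + B*U2)*(C*z+D) - (C*U1 + D*U2)*(A*z+B) = (A*D - B*C)*(U1 - U2*z)"
    by (simp add: algebra_simps)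
  have "(A*U1 + B*U2) - (C*U1 + D*U2) * ((A*z+B)/(C*z+D)) = ((A*U1 + B*U2)*(C*z+D) - (C*U1 + D*U2)*(A*z+B))/(C*z+D)"
    using n by (simp add: field_simps)
  also have "\<dots> = (U1 - U2*z)/(C*z+D)" unfolding e d by simp
  finally show ?thesis .
qed

lemma dc_moeb:
  fixes M :: "real^2^2"
  assumes z: "Im z > 0" and d: "det M = 1"
  shows "dc (mv M u) (moeb M z) = dc u z / (of_real (M$2$1) * z + of_real (M$2$2))"
proof -
  have n: "of_real (M$2$1) * z + of_real (M$2$2) \<noteq> 0" using moeb_den[OF z] d by simp
  have d': "M$1$1 * M$2$2 - M$1$2 * M$2$1 = 1" using d by (simp add: det2)
  obtain u1 u2 where u: "u = (u1,u2)" by (cases u)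
  show ?thesis unfolding u dc_def mv_def moeb_def fst_conv snd_conv of_real_add of_real_mult
    by (rule moeb_gen[OF n]) (use d' in \<open>simp flip: of_real_mult of_real_diff\<close>)
qed

lemma Im_moeb:
  fixes M :: "real^2^2"
  assumes z: "Im z > 0" and d: "det M = 1"
  shows "Im (moeb M z) = Im z / (cmod (of_real (M$2$1) * z + of_real (M$2$2)))^2"
proof -
  have d': "M$1$1 * M$2$2 - M$1$2 * M$2$1 = 1" using d by (simp add: det2)
  have e: "M$1$1 * Im z * (M$2$1 * Re z + M$2$2) - (M$1$1 * Re z + M$1$2) * (M$2$1 * Im z) = Im z"
    using d' by (simp add: algebra_simps)
  show ?thesis unfolding moeb_def cmod_power2 Im_divide
    using e by (simp add: algebra_simps)
qed

lemma moeb_geod: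
  fixes M :: "real^2^2"
  assumes z: "z \<in> geod g" and d: "det M = 1"
  shows "moeb M z \<in> geod (gact M g)"
proof -
  define p where "p = bv (fst g)"
  define q where "q = bv (snd g)"
  have zz: "Im z > 0" "dt q p \<noteq> 0" "Qf p q z = 0" using z by (auto simp: geod_bv p_def q_def)
  have d0: "det M \<noteq> 0" using d by simp
  obtain k1 where k1: "k1 \<noteq> 0" "bv (bact M (fst g)) = sc k1 (mv M p)" using bv_bact[OF d0] p_def by blast
  obtain k2 where k2: "k2 \<noteq> 0" "bv (bact M (snd g)) = sc k2 (mv M q)" using bv_bact[OF d0] q_def by blast
  define D where "D = of_real (M$2$1) * z + of_real (M$2$2)"
  have D: "D \<noteq> 0" using moeb_den[OF zz(1) d0] D_def by simp
  have D2: "(cmod D)^2 > 0" using D by simp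
  have "Im (moeb M z) > 0" using Im_moeb[OF zz(1) d] D2 zz(1) by (simp add: D_def)
  moreover have "dt (sc k2 (mv M q)) (sc k1 (mv M p)) \<noteq> 0"
    using k1 k2 zz(2) d by (simp add: dt_sc dt_mv)
  moreover have "Qf (sc k1 (mv M p)) (sc k2 (mv M q)) (moeb M z) = 0"
  proof -
    have "Qf (mv M p) (mv M q) (moeb M z) = Re (dc p z / D * cnj (dc q z / D))"
      unfolding Qf_def dc_moeb[OF zz(1) d] D_def ..
    also have "\<dots> = Qf p q z / (cmod D)^2"
    proof -
      have "dc p z / D * cnj (dc q z / D) = (dc p z * cnj (dc q z)) / (D * cnj D)"
        by simp
      also have "D * cnj D = of_real ((cmod D)^2)" by (simp add: complex_mult_cnj cmod_power2)
      finally have "dc p z / D * cnj (dc q z / D) = (dc p z * cnj (dc q z)) / of_real ((cmod D)^2)" .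
      then show ?thesis unfolding Qf_def by (metis Re_divide_of_real)
    qed
    finally show ?thesis using zz(3) by (simp add: Qf_sc)
  qed
  ultimately show ?thesis unfolding gact_def geod_bv fst_conv snd_conv k1(2) k2(2) by simp
qed

lemma gg_gen: "s \<in> S \<Longrightarrow> s \<in> gen_group S"
  using gen_group.step[OF _ gen_group.one, of s S] by simp

lemma gg_mult: "M \<in> gen_group S \<Longrightarrow> N \<in> gen_group S \<Longrightarrow> M ** N \<in> gen_group S"
proof (induction M rule: gen_group.induct)
  case one then show ?case by simp
next
  case (step s M) then show ?case by (metis gen_group.step matrix_mul_assoc)
qed

lemma gg_det:
  fixes M :: "real^2^2"
  assumes "\<And>s. s \<in> S \<Longrightarrow> det s = 1" and "M \<in> gen_group S" shows "det M = 1"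
  using assms(2) proof (induction M rule: gen_group.induct)
  case one then show ?case by simp
next
  case (step s M) then show ?case using assms(1) by (simp add: det_mul)
qed

lemma inv2_ent[simp]: "(inv2 M)$1$1 = M$2$2" "(inv2 M)$1$2 = - M$1$2" "(inv2 M)$2$1 = - M$2$1" "(inv2 M)$2$2 = M$1$1"
  by (simp_all add: inv2_def)

lemma inv2_mm: "inv2 (A ** B) = inv2 B ** inv2 A"
  by (simp add: mat_eq mm_ent algebra_simps)

lemma inv2_inv2[simp]: "inv2 (inv2 A) = A"
  by (simp add: mat_eq)

lemma inv2_one[simp]: "inv2 (mat 1) = mat 1"
  by (simp add: mat_eq)

lemma inv2_neg: "inv2 (- A) = - inv2 A"
  by (simp add: mat_eq)

lemma det_inv2: "det (inv2 M) = det M"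
  by (simp add: det2 algebra_simps)

lemma mm_inv2: "det M = 1 \<Longrightarrow> M ** inv2 M = mat 1"
  by (simp add: mat_eq mm_ent det2 algebra_simps)

lemma inv2_mm_l: "det M = 1 \<Longrightarrow> inv2 M ** M = mat 1"
  by (simp add: mat_eq mm_ent det2 algebra_simps)

lemma neg_mm: "(- A) ** B = - (A ** B)" "A ** (- B) = - (A ** B)" for A B :: "real^2^2"
  by (simp_all add: mat_eq mm_ent)

lemma gg_inv:
  assumes "\<And>s. s \<in> S \<Longrightarrow> inv2 s \<in> gen_group S" and "M \<in> gen_group S" shows "inv2 M \<in> gen_group S"
  using assms(2) proof (induction M rule: gen_group.induct)
  case one then show ?case by (simp add: gen_group.one)
next
  case (step s M) then show ?case using assms(1) by (simp add: inv2_mm gg_mult)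
qed

lemma Imat_det: "det Imat = 1" by (simp add: Imat_def det2)
lemma Imat_sq: "Imat ** Imat = - mat 1" by (simp add: Imat_def mat_eq mm_ent)
lemma Imat_inv: "inv2 Imat = - Imat" by (simp add: Imat_def mat_eq)

lemma adm_det: "admissible_R R \<Longrightarrow> det R = 1"
  by (simp add: admissible_R_def)

lemma cube_root: 
  assumes "cis (- 2 * pi / 3) = \<omega>"
  shows "\<omega>^3 = 1" "\<omega> \<noteq> 1"
proof -
  have "\<omega>^3 = cis (real 3 * (- 2 * pi / 3))" unfolding assms[symmetric] by (rule Complex.DeMoivre)
  also have "real 3 * (- 2 * pi / 3) = 2 * pi * (-1)" by simp
  also have "cis (2 * pi * (-1)) = 1" by (rule cis_multiple_2pi) simp
  finally show "\<omega>^3 = 1" .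
  have "sin (2 * pi / 3) > 0" by (rule sin_gt_zero) auto
  then have "Im \<omega> < 0" unfolding assms[symmetric] by simp
  then show "\<omega> \<noteq> 1" by auto
qed

lemma trace_sq:
  assumes adm: "admissible_R R"
  shows "(R$1$1 + R$2$2)^2 = 1"
proof -
  have d: "det R = 1" using adm by (simp add: admissible_R_def)
  obtain p where p: "Im p > 0" "moeb R p = p" "(moeb R has_field_derivative cis (- 2 * pi / 3)) (at p)"
    using adm unfolding admissible_R_def by blast
  define A where "A = complex_of_real (R$1$1)"
  define B where "B = complex_of_real (R$1$2)"
  define C where "C = complex_of_real (R$2$1)"
  define D where "D = complex_of_real (R$2$2)"
  have dA: "A*D - B*C = 1" using d unfolding A_def B_def C_def D_def det2
    by (metis of_real_1 of_real_diff of_real_mult)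
  define lm where "lm = C * p + D"
  have ln: "lm \<noteq> 0" using moeb_den[OF p(1), of R] d by (simp add: lm_def C_def D_def)
  have mo: "moeb R = (\<lambda>z. (A*z+B)/(C*z+D))" by (auto simp: moeb_def A_def B_def C_def D_def)
  have "((\<lambda>z. (A*z+B)/(C*z+D)) has_field_derivative ((A*(C*p+D) - (A*p+B)*C)/(C*p+D)^2)) (at p)"
    using ln unfolding lm_def
    by (auto intro!: derivative_eq_intros simp: power2_eq_square)
  moreover have "(A*(C*p+D) - (A*p+B)*C) = 1" using dA by (simp add: algebra_simps)
  ultimately have "((\<lambda>z. (A*z+B)/(C*z+D)) has_field_derivative (1/lm^2)) (at p)"
    unfolding lm_def by simp
  then have om: "cis (- 2 * pi / 3) = 1 / lm^2" using p(3) mo DERIV_unique by metis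
  have o3: "(1/lm^2)^3 = 1" and o1: "1/lm^2 \<noteq> 1" using cube_root[OF om] by auto
  have fx: "A*p + B = lm * p" using p(2) ln unfolding mo lm_def by (simp add: field_simps)
  define t where "t = A + D"
  have ch: "lm^2 - t*lm + 1 = 0"
  proof -
    have "lm^2 - t*lm + 1 = (C*p + D)*(C*p - A) + 1" by (simp add: lm_def t_def power2_eq_square algebra_simps)
    also have "(C*p + D)*(C*p - A) = C*((C*p+D)*p - A*p) - A*D" by (simp add: algebra_simps)
    also have "(C*p+D)*p - A*p = B" using fx unfolding lm_def by (simp add: algebra_simps)
    finally show ?thesis using dA by (simp add: algebra_simps)
  qed
  define \<mu> where "\<mu> = lm^2"
  have mu: "\<mu> \<noteq> 0" using ln by (simp add: \<mu>_def)
  have m3: "\<mu>^3 = 1" using o3 mu by (simp add: \<mu>_def power_divide field_simps)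
  have m1: "\<mu> \<noteq> 1" using o1 by (auto simp: \<mu>_def)
  have mq: "\<mu>^2 + \<mu> + 1 = 0"
  proof -
    have "(\<mu> - 1) * (\<mu>^2 + \<mu> + 1) = 0" using m3 by (simp add: algebra_simps power3_eq_cube power2_eq_square)
    then show ?thesis using m1 by simp
  qed
  have "t^2 * \<mu> = (\<mu> + 1)^2" using ch unfolding \<mu>_def by (simp add: power2_eq_square algebra_simps)
  also have "\<dots> = \<mu>" using mq by (simp add: power2_eq_square algebra_simps)
  finally have "t^2 = 1" using mu by simp
  then have "complex_of_real ((R$1$1 + R$2$2)^2) = 1" by (simp add: t_def A_def D_def)
  then show ?thesis using of_real_eq_1_iff by blast
qed

lemma cube_gen:
  fixes a b c d :: real
  assumes "a*d - b*c = 1" "(a + d)^2 = 1"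
  shows "(a*a + b*c)*a + (a*b + b*d)*c = -(a+d)" "(a*a + b*c)*b + (a*b + b*d)*d = 0"
        "(c*a + d*c)*a + (c*b + d*d)*c = 0" "(c*a + d*c)*b + (c*b + d*d)*d = -(a+d)"
  using assms by algebra+

lemma R_cube:
  assumes adm: "admissible_R R"
  shows "R ** R ** R = mat 1 \<or> R ** R ** R = - mat 1"
proof -
  have d: "R$1$1 * R$2$2 - R$1$2 * R$2$1 = 1" using adm_det[OF adm] by (simp add: det2)
  have t: "(R$1$1 + R$2$2)^2 = 1" by (rule trace_sq[OF adm])
  note cg = cube_gen[OF d t]
  have e: "R ** R ** R = mat2 (-(R$1$1 + R$2$2)) 0 0 (-(R$1$1 + R$2$2))"
    unfolding mat_eq mm_ent mat2_ent using cg by (simp add: algebra_simps)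
  have "R$1$1 + R$2$2 = 1 \<or> R$1$1 + R$2$2 = -1" using t by (simp add: power2_eq_1_iff)
  then show ?thesis unfolding e by (auto simp: mat_eq)
qed




section \<open>Shape of the triangle\<close>

lemma geod_swap: "geod (prod.swap g) = geod g"
proof -
  have "dt (bv (fst g)) (bv (snd g)) \<noteq> 0 \<longleftrightarrow> dt (bv (snd g)) (bv (fst g)) \<noteq> 0"
    using dt_swap[of "bv (fst g)" "bv (snd g)"] by simp
  then show ?thesis by (auto simp: geod_bv Qf_comm[of "bv (fst g)"])
qed

lemma lside_swap_cl: "z \<in> lside (prod.swap g) \<Longrightarrow> z \<notin> cl_lside g"
proof -
  assume z: "z \<in> lside (prod.swap g)"
  have "FF (bv (snd g)) (bv (fst g)) z > 0" using z by (simp add: lside_bv)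
  then have n: "FF (bv (fst g)) (bv (snd g)) z < 0" using FF_swap[of "bv (snd g)" "bv (fst g)" z] by simp
  show "z \<notin> cl_lside g"
    using n by (auto simp: cl_lside_def lside_bv geod_bv FF_def)
qed

lemma bleft_e0: "bleft e0 (Fin y) \<longleftrightarrow> y > 0" "bleft (prod.swap e0) (Fin y) \<longleftrightarrow> y < 0"
  by (simp_all add: bleft_def e0_def)

lemma bleft_fin: "bleft (Fin t, Fin h) (Fin y) \<longleftrightarrow> t \<noteq> h \<and> (h - t) * (t - y) * (h - y) > 0"
  using bleft_bv[of "(Fin t, Fin h)" "Fin y"] by (auto simp: bl_def)

lemma side_shape:
  assumes dj: "disjoint_geods e0 S" and P: "P \<in> geod S" "P \<in> cl_lside e0"
    and far: "\<And>Y. Y \<ge> 1 \<Longrightarrow> (1/2 + \<i> * of_real Y) \<in> cl_lside S"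
  shows "\<exists>t h. S = (Fin t, Fin h) \<and> 0 < t \<and> t < h"
proof -
  obtain a b where S: "S = (a,b)" by (cases S)
  have ab: "a \<noteq> Inf" "b \<noteq> Inf" "a \<noteq> Fin 0" "b \<noteq> Fin 0"
    using dj by (auto simp: disjoint_geods_def S e0_def)
  then obtain t h where th: "a = Fin t" "b = Fin h" by (cases a; cases b) auto
  have t0: "t \<noteq> 0" "h \<noteq> 0" using ab th by auto
  have tnh: "t \<noteq> h" using P(1) by (auto simp: geod_def S th)
  have gd: "geod e0 \<inter> geod S = {}" using dj by (simp add: disjoint_geods_def)
  have pos: "0 < t \<and> 0 < h"
  proof -
    have "\<not> (t < 0 \<and> 0 < h)"
    proof
      assume "t < 0 \<and> 0 < h"
      then have "bleft e0 (snd S)" "bleft (prod.swap e0) (fst S)" by (auto simp: S th bleft_e0)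
      then obtain z where "z \<in> geod S" "z \<in> geod e0" using cross_meet by blast
      then show False using gd by blast
    qed
    moreover have "\<not> (h < 0 \<and> 0 < t)"
    proof
      assume "h < 0 \<and> 0 < t"
      then have "bleft e0 (snd (prod.swap S))" "bleft (prod.swap e0) (fst (prod.swap S))" by (auto simp: S th bleft_e0)
      then obtain z where "z \<in> geod (prod.swap S)" "z \<in> geod e0" using cross_meet by blast
      then show False using gd geod_swap by blast
    qed
    moreover have "\<not> (t < 0 \<and> h < 0)"
    proof
      assume "t < 0 \<and> h < 0"
      then have "bleft (prod.swap e0) (fst S)" "bleft (prod.swap e0) (snd S)" by (auto simp: S th bleft_e0)
      then have "P \<in> lside (prod.swap e0)" using geod_in_lside P(1) by blast
      then show False using lside_swap_cl[of P "e0"] P(2) by simp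
    qed
    ultimately show ?thesis using t0 by linarith
  qed
  have "t < h"
  proof (rule ccontr)
    assume "\<not> t < h"
    then have ht: "h < t" using tnh by simp
    define Y where "Y = \<bar>t - h\<bar> + 1"
    have Y: "Y \<ge> 1" by (simp add: Y_def)
    define z where "z = 1/2 + \<i> * of_real Y"
    have zc: "z \<in> cl_lside S" using far[OF Y] by (simp add: z_def)
    have rz: "Re z = 1/2" "Im z = Y" by (simp_all add: z_def)
    have Q: "Qf (t,1) (h,1) z \<le> 0"
    proof -
      have "z \<in> lside S \<or> z \<in> geod S" using zc by (simp add: cl_lside_def)
      then show ?thesis
      proof
        assume "z \<in> lside S"
        then have "(h - t) * Qf (t,1) (h,1) z > 0" by (simp add: lside_bv S th FF_def)
        then show ?thesis using ht by (simp add: zero_less_mult_iff)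
      next
        assume "z \<in> geod S"
        then show ?thesis by (simp add: geod_bv S th)
      qed
    qed
    have a: "0 \<le> (t - 1/2) * (h - 1/2) + ((t - h)/2)^2"
    proof -
      have "(t - 1/2) * (h - 1/2) + ((t - h)/2)^2 = ((t + h)/2 - 1/2)^2" by (simp add: power2_eq_square field_simps)
      moreover have "((t + h)/2 - 1/2)^2 \<ge> 0" by simp
      ultimately show ?thesis by linarith
    qed
    have b: "Y^2 > ((t - h)/2)^2"
    proof -
      have "\<bar>(t - h)/2\<bar> < Y" by (simp add: Y_def)
      then have "(\<bar>(t - h)/2\<bar>)^2 < Y^2" by (intro power_strict_mono) auto
      then show ?thesis by (metis power2_abs abs_divide abs_numeral)
    qed
    have "Qf (t,1) (h,1) z = (t - 1/2) * (h - 1/2) + Y^2" by (simp add: Qf_ri rz)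
    then show False using Q a b by linarith
  qed
  then show ?thesis using pos S th by blast
qed



lemma bleft_int:
  assumes "t < h"
  shows "bleft (Fin t, Fin h) (Fin y) \<longleftrightarrow> y < t \<or> h < y"
    and "bleft (Fin h, Fin t) (Fin y) \<longleftrightarrow> t < y \<and> y < h"
    and "bleft (Fin t, Fin h) Inf" and "\<not> bleft (Fin h, Fin t) Inf"
proof -
  have hp: "h - t > 0" using assms by simp
  have "(h - t) * (t - y) * (h - y) > 0 \<longleftrightarrow> (t - y) * (h - y) > 0"
    using hp by (simp add: mult.assoc zero_less_mult_iff)
  also have "\<dots> \<longleftrightarrow> y < t \<or> h < y" using assms by (auto simp: zero_less_mult_iff)
  finally show "bleft (Fin t, Fin h) (Fin y) \<longleftrightarrow> y < t \<or> h < y" using assms by (simp add: bleft_fin)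
  have "(t - h) * (h - y) * (t - y) > 0 \<longleftrightarrow> (h - y) * (t - y) < 0"
    using hp by (simp add: mult.assoc mult_less_0_iff zero_less_mult_iff)
  also have "\<dots> \<longleftrightarrow> t < y \<and> y < h" using assms by (auto simp: mult_less_0_iff)
  finally show "bleft (Fin h, Fin t) (Fin y) \<longleftrightarrow> t < y \<and> y < h" using assms by (simp add: bleft_fin)
  show "bleft (Fin t, Fin h) Inf" "\<not> bleft (Fin h, Fin t) Inf" using assms by (simp_all add: bleft_def)
qed

lemma side_sep:
  assumes S1: "S1 = (Fin t1, Fin h1)" "t1 < h1" and S2: "S2 = (Fin t2, Fin h2)" "t2 < h2"
    and dj: "disjoint_geods S1 S2" and P: "P \<in> geod S2" "P \<in> cl_lside S1"
  shows "(t2 < t1 \<or> h1 < t2) \<and> (h2 < t1 \<or> h1 < h2)"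
proof -
  have ne: "t2 \<noteq> t1" "t2 \<noteq> h1" "h2 \<noteq> t1" "h2 \<noteq> h1"
    using dj by (auto simp: disjoint_geods_def S1 S2)
  have gd: "geod S1 \<inter> geod S2 = {}" using dj by (simp add: disjoint_geods_def)
  note L = bleft_int(1)[OF S1(2)] and Rt = bleft_int(2)[OF S1(2)]
  define lf where "lf y \<longleftrightarrow> y < t1 \<or> h1 < y" for y
  have tri: "lf y \<or> (t1 < y \<and> y < h1)" if "y \<noteq> t1" "y \<noteq> h1" for y
    using that by (auto simp: lf_def)
  have c1: "\<not> (lf h2 \<and> t1 < t2 \<and> t2 < h1)"
  proof
    assume a: "lf h2 \<and> t1 < t2 \<and> t2 < h1"
    then have "bleft S1 (snd S2)" "bleft (prod.swap S1) (fst S2)"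
      using L Rt by (auto simp: S1 S2 lf_def)
    then obtain z where "z \<in> geod S2" "z \<in> geod S1" using cross_meet by blast
    then show False using gd by blast
  qed
  have c2: "\<not> (lf t2 \<and> t1 < h2 \<and> h2 < h1)"
  proof
    assume a: "lf t2 \<and> t1 < h2 \<and> h2 < h1"
    then have "bleft S1 (snd (prod.swap S2))" "bleft (prod.swap S1) (fst (prod.swap S2))"
      using L Rt by (auto simp: S1 S2 lf_def)
    then obtain z where "z \<in> geod (prod.swap S2)" "z \<in> geod S1" using cross_meet by blast
    then show False using gd geod_swap by blast
  qed
  have c3: "\<not> ((t1 < t2 \<and> t2 < h1) \<and> (t1 < h2 \<and> h2 < h1))"
  proof
    assume a: "(t1 < t2 \<and> t2 < h1) \<and> (t1 < h2 \<and> h2 < h1)"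
    then have "bleft (prod.swap S1) (fst S2)" "bleft (prod.swap S1) (snd S2)"
      using Rt by (auto simp: S1 S2)
    then have "P \<in> lside (prod.swap S1)" using geod_in_lside P(1) by blast
    then show False using lside_swap_cl P(2) by blast
  qed
  have "lf t2" "lf h2" using tri[OF ne(1,2)] tri[OF ne(3,4)] c1 c2 c3 by blast+
  then show ?thesis by (simp add: lf_def)
qed

lemma i_geod_e0: "\<i> \<in> geod e0"
  by (simp add: geod_def e0_def)

lemma i_Delta0: "\<i> \<in> Delta0"
proof -
  have "\<bar>Im (\<i> - 1/2)\<bar> \<le> cmod (\<i> - 1/2)" by (rule abs_Im_le_cmod)
  then show ?thesis by (simp add: Delta0_def)
qed

lemma far_Delta0: "Y \<ge> 1 \<Longrightarrow> 1/2 + \<i> * of_real Y \<in> Delta0"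
  by (simp add: Delta0_def norm_mult)

lemma disj_sym: "disjoint_geods a b \<Longrightarrow> disjoint_geods b a"
  by (auto simp: disjoint_geods_def)

lemma adm_facts:
  assumes adm: "admissible_R R"
  shows "\<exists>t1 h1 t2 h2. side1 R = (Fin t1, Fin h1) \<and> side2 R = (Fin t2, Fin h2) \<and> 0 < t1 \<and> t1 < h1
          \<and> 0 < t2 \<and> t2 < h2 \<and> (h1 < t2 \<or> h2 < t1)"
proof -
  have d: "det R = 1" using adm by (simp add: admissible_R_def)
  have D0: "Delta0 \<subseteq> Delta R" and inv: "moeb R ` Delta R = Delta R"
    and dj1: "disjoint_geods e0 (side1 R)" and dj2: "disjoint_geods e0 (side2 R)"
    and dj12: "disjoint_geods (side1 R) (side2 R)"
    using adm by (auto simp: admissible_R_def)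
  have s2: "side2 R = gact R (side1 R)" using d by (simp add: side2_def side1_def gact_mm)
  define P1 where "P1 = moeb R \<i>"
  define P2 where "P2 = moeb R P1"
  have iD: "\<i> \<in> Delta R" using D0 i_Delta0 by blast
  have P1D: "P1 \<in> Delta R" using iD inv unfolding P1_def by blast
  have P2D: "P2 \<in> Delta R" using P1D inv unfolding P2_def by blast
  have P1g: "P1 \<in> geod (side1 R)" unfolding P1_def side1_def using moeb_geod[OF i_geod_e0 d] .
  have P2g: "P2 \<in> geod (side2 R)" unfolding P2_def s2 using moeb_geod[OF P1g d] .
  have Dsub: "Delta R \<subseteq> cl_lside e0" "Delta R \<subseteq> cl_lside (side1 R)" "Delta R \<subseteq> cl_lside (side2 R)"
    by (auto simp: Delta_def)
  have far1: "1/2 + \<i> * of_real Y \<in> cl_lside (side1 R)" if "Y \<ge> 1" for Y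
    using far_Delta0[OF that] D0 Dsub by blast
  have far2: "1/2 + \<i> * of_real Y \<in> cl_lside (side2 R)" if "Y \<ge> 1" for Y
    using far_Delta0[OF that] D0 Dsub by blast
  obtain t1 h1 where sh1: "side1 R = (Fin t1, Fin h1)" "0 < t1" "t1 < h1"
    using side_shape[OF dj1 P1g _ far1] P1D Dsub by blast
  obtain t2 h2 where sh2: "side2 R = (Fin t2, Fin h2)" "0 < t2" "t2 < h2"
    using side_shape[OF dj2 P2g _ far2] P2D Dsub by blast
  have a: "(t2 < t1 \<or> h1 < t2) \<and> (h2 < t1 \<or> h1 < h2)"
    using side_sep[OF sh1(1,3) sh2(1,3) dj12 P2g] P2D Dsub by blast
  have b: "(t1 < t2 \<or> h2 < t1) \<and> (h1 < t2 \<or> h2 < h1)"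
    using side_sep[OF sh2(1,3) sh1(1,3) disj_sym[OF dj12] P1g] P1D Dsub by blast
  have "h1 < t2 \<or> h2 < t1" using a b sh1 sh2 by linarith
  then show ?thesis using sh1 sh2 by blast
qed


lemma bleft_excl: "bleft g \<xi> \<Longrightarrow> \<not> bleft (prod.swap g) \<xi>"
proof
  assume a: "bleft g \<xi>" and b: "bleft (prod.swap g) \<xi>"
  let ?u = "bv (fst g)" and ?v = "bv (snd g)" and ?w = "bv \<xi>"
  have "dt ?v ?u * dt ?u ?w * dt ?v ?w > 0" using a by (simp add: bleft_bv bl_def)
  moreover have "dt ?u ?v * dt ?v ?w * dt ?u ?w > 0" using b by (simp add: bleft_bv bl_def)
  ultimately show False using dt_swap[of ?u ?v] by (simp add: algebra_simps)
qed

lemma bact_I: "bact Imat Inf = Fin 0" "y \<noteq> 0 \<Longrightarrow> bact Imat (Fin y) = Fin (- 1 / y)"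
  "bact Imat (Fin 0) = Inf"
  by (simp_all add: bact_def Imat_def)

lemma gact_I_e0: "gact Imat e0 = prod.swap e0"
  by (simp add: gact_def e0_def bact_I)

lemma I_P: "bleft e0 \<xi> \<Longrightarrow> bleft (prod.swap e0) (bact Imat \<xi>)"
  by (cases \<xi>) (auto simp: bact_I bleft_e0 bleft_def e0_def)

lemma I_A0: "bleft (prod.swap e0) \<xi> \<Longrightarrow> bleft e0 (bact Imat \<xi>)"
  by (cases \<xi>) (auto simp: bact_I bleft_e0 bleft_def e0_def)

locale sideS =
  fixes S :: ogeod and t h :: real
  assumes S: "S = (Fin t, Fin h)" and tpos: "0 < t" and th: "t < h"
begin

lemma ends_P: "bleft e0 (fst S)" "bleft e0 (snd S)"
  using tpos th by (simp_all add: S bleft_e0)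

lemma A_P: "bleft (prod.swap S) \<xi> \<Longrightarrow> bleft e0 \<xi>"
  using tpos th by (cases \<xi>) (auto simp: S bleft_int bleft_e0)

lemma A_fin: "bleft (prod.swap S) \<xi> \<Longrightarrow> \<exists>y. \<xi> = Fin y \<and> t < y \<and> y < h"
  using tpos th by (cases \<xi>) (auto simp: S bleft_int)

lemma A0_left: "bleft (prod.swap e0) \<xi> \<Longrightarrow> bleft S \<xi>"
proof (cases \<xi>)
  case Inf then show ?thesis using tpos th by (simp add: S bleft_int)
next
  case (Fin y) then show "bleft (prod.swap e0) \<xi> \<Longrightarrow> ?thesis" using tpos th by (simp add: S bleft_int bleft_e0)
qed

lemma e0_left: "bleft S (fst e0)" "bleft S (snd e0)"
  using tpos th by (simp_all add: S bleft_int e0_def)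

end


section \<open>Classification of leaves\<close>

inductive xi and xr for R :: "real^2^2" where
  xi1: "g \<in> {side1 R, side2 R, prod.swap (side1 R), prod.swap (side2 R)} \<Longrightarrow> xi R (gact Imat g)"
| xi2: "xr R g \<Longrightarrow> xi R (gact Imat g)"
| xr1: "xi R g \<Longrightarrow> xr R (gact R g)"
| xr2: "xi R g \<Longrightarrow> xr R (gact (R ** R) g)"

definition sides6 :: "real^2^2 \<Rightarrow> ogeod set" where
  "sides6 R = {e0, prod.swap e0, side1 R, prod.swap (side1 R), side2 R, prod.swap (side2 R)}"

definition Inv :: "real^2^2 \<Rightarrow> ogeod \<Rightarrow> bool" where
  "Inv R g \<longleftrightarrow> g \<in> sides6 R \<or> xi R g \<or> xr R g"

definition ends_in :: "(bpt \<Rightarrow> bool) \<Rightarrow> ogeod \<Rightarrow> bool" where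
  "ends_in X g \<longleftrightarrow> X (fst g) \<and> X (snd g)"

lemma Imat_neg_inv: "gact (inv2 Imat) g = gact Imat g"
  by (simp add: Imat_inv gact_neg)

context
  fixes R :: "real^2^2"
  assumes adm: "admissible_R R"
begin

lemma dR: "det R = 1" using adm by (simp add: admissible_R_def)

lemma dR2: "det (R ** R) = 1" using dR by (simp add: det_mul)

lemma gR2: "gact (R ** R) g = gact R (gact R g)"
  using dR by (simp add: gact_mm)

lemma gR3: "gact R (gact R (gact R g)) = g"
proof -
  have "gact R (gact R (gact R g)) = gact (R ** R ** R) g"
    using dR dR2 by (simp add: gact_mm)
  also have "\<dots> = g" using R_cube[OF adm] by (auto simp: gact_neg)
  finally show ?thesis .
qed

lemma inv2R: "gact (inv2 R) g = gact R (gact R g)"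
proof -
  have "gact (inv2 R) g = gact (inv2 R) (gact R (gact R (gact R g)))" by (simp add: gR3)
  also have "\<dots> = gact (inv2 R ** R) (gact R (gact R g))"
    using dR by (simp add: gact_mm)
  also have "\<dots> = gact R (gact R g)" using dR by (simp add: inv2_mm_l)
  finally show ?thesis .
qed

lemma side2_R: "side2 R = gact R (side1 R)"
  by (simp add: side2_def side1_def gR2)

lemma R_side2: "gact R (side2 R) = e0"
proof -
  have "gact R (side2 R) = gact R (gact R (gact R e0))" by (simp add: side2_R side1_def)
  then show ?thesis using gR3 by simp
qed

lemma sideS_ex: "S \<in> {side1 R, side2 R} \<Longrightarrow> \<exists>t h. sideS S t h"
  using adm_facts[OF adm] by (auto simp: sideS_def)

lemma A0_to_A1: "bleft (prod.swap e0) \<xi> \<Longrightarrow> bleft (prod.swap (side1 R)) (bact R \<xi>)"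
  using bleft_gact[of R "prod.swap e0" \<xi>] dR by (simp add: side1_def gact_swap)

lemma A0_to_A2: "bleft (prod.swap e0) \<xi> \<Longrightarrow> bleft (prod.swap (side2 R)) (bact (R ** R) \<xi>)"
  using bleft_gact[of "R ** R" "prod.swap e0" \<xi>] dR2 by (simp add: side2_def gact_swap)

lemma loc: "(xi R g \<longrightarrow> ends_in (bleft (prod.swap e0)) g)
   \<and> (xr R g \<longrightarrow> ends_in (bleft (prod.swap (side1 R))) g \<or> ends_in (bleft (prod.swap (side2 R))) g)"
proof (induction rule: xi_xr.induct)
  case (xi1 g)
  then have "\<exists>S \<in> {side1 R, side2 R}. g = S \<or> g = prod.swap S" by blast
  then obtain S where S: "S \<in> {side1 R, side2 R}" "g = S \<or> g = prod.swap S" by blast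
  obtain t h where "sideS S t h" using sideS_ex[OF S(1)] by blast
  note e = sideS.ends_P[OF this]
  have "bleft e0 (fst g) \<and> bleft e0 (snd g)" using S(2) e by (cases S) auto
  then have "bleft e0 (fst g)" "bleft e0 (snd g)" by auto
  then show ?case by (simp add: ends_in_def gact_def I_P)
next
  case (xi2 g)
  then have "\<exists>S \<in> {side1 R, side2 R}. ends_in (bleft (prod.swap S)) g" by blast
  then obtain S where S: "S \<in> {side1 R, side2 R}" "ends_in (bleft (prod.swap S)) g" by blast
  obtain t h where "sideS S t h" using sideS_ex[OF S(1)] by blast
  then have "bleft e0 (fst g)" "bleft e0 (snd g)" using S(2) sideS.A_P unfolding ends_in_def by blast+
  then show ?case by (simp add: ends_in_def gact_def I_P)
next
  case (xr1 g)
  then show ?case by (simp add: ends_in_def gact_def A0_to_A1)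
next
  case (xr2 g)
  then show ?case by (simp add: ends_in_def gact_def A0_to_A2)
qed

lemma Inv_I: "Inv R g \<Longrightarrow> Inv R (gact Imat g)"
proof -
  assume "Inv R g"
  then consider "g \<in> sides6 R" | "xi R g" | "xr R g" unfolding Inv_def by blast
  then show ?thesis
  proof cases
    case 1
    then consider "g = e0" | "g = prod.swap e0" | "g \<in> {side1 R, side2 R, prod.swap (side1 R), prod.swap (side2 R)}"
      unfolding sides6_def by blast
    then show ?thesis
    proof cases
      case 1 then show ?thesis by (simp add: Inv_def sides6_def gact_I_e0)
    next
      case 2
      have "gact Imat (prod.swap e0) = e0" by (simp add: gact_swap gact_I_e0)
      then show ?thesis using 2 by (simp add: Inv_def sides6_def)
    next
      case 3 then show ?thesis by (simp add: Inv_def xi1)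
    qed
  next
    case 2
    then show ?thesis
    proof cases
      case (xi1 g')
      have "gact Imat (gact Imat g') = g'" by (simp add: gact_mm[symmetric] Imat_det Imat_sq gact_neg)
      then show ?thesis using xi1 by (auto simp: Inv_def sides6_def)
    next
      case (xi2 g')
      have "gact Imat (gact Imat g') = g'" by (simp add: gact_mm[symmetric] Imat_det Imat_sq gact_neg)
      then show ?thesis using xi2 by (simp add: Inv_def)
    qed
  next
    case 3 then show ?thesis by (simp add: Inv_def xi2)
  qed
qed

lemma Inv_R: "Inv R g \<Longrightarrow> Inv R (gact R g)"
proof -
  assume "Inv R g"
  then consider "g \<in> sides6 R" | "xi R g" | "xr R g" unfolding Inv_def by blast
  then show ?thesis
  proof cases
    case 1
    have "gact R e0 = side1 R" "gact R (side1 R) = side2 R" "gact R (side2 R) = e0"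
      by (simp add: side1_def, simp add: side2_R, rule R_side2)
    then have "gact R ` sides6 R \<subseteq> sides6 R" by (auto simp: sides6_def gact_swap)
    then show ?thesis using 1 by (auto simp: Inv_def)
  next
    case 2 then show ?thesis by (simp add: Inv_def xr1)
  next
    case 3
    then show ?thesis
    proof cases
      case (xr1 g')
      then show ?thesis by (simp add: Inv_def gR2[symmetric] xr2)
    next
      case (xr2 g')
      then show ?thesis by (simp add: Inv_def gR2 gR3)
    qed
  qed
qed

lemma Inv_gamma: "\<delta> \<in> Gamma R \<Longrightarrow> Inv R (gact \<delta> e0)"
  unfolding Gamma_def
proof (induction \<delta> rule: gen_group.induct)
  case one
  then show ?case by (simp add: Inv_def sides6_def)
next
  case (step s M)
  have dM: "det M = 1"
    by (rule gg_det[OF _ step(2)]) (auto simp: Imat_det dR det_inv2)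
  have e: "gact (s ** M) e0 = gact s (gact M e0)" using dM by (simp add: gact_mm)
  from step(1) show ?case unfolding e
    using step(3) by (auto simp: Imat_neg_inv inv2R Inv_I Inv_R)
qed

lemma Gamma_det: "\<delta> \<in> Gamma R \<Longrightarrow> det \<delta> = 1"
  unfolding Gamma_def by (rule gg_det) (auto simp: Imat_det dR det_inv2)

lemma Gamma_mult: "a \<in> Gamma R \<Longrightarrow> b \<in> Gamma R \<Longrightarrow> a ** b \<in> Gamma R"
  unfolding Gamma_def by (rule gg_mult)

lemma Gamma_inv: "a \<in> Gamma R \<Longrightarrow> inv2 a \<in> Gamma R"
  unfolding Gamma_def by (rule gg_inv) (auto intro: gg_gen)

lemma R_Gamma: "R \<in> Gamma R" "Imat \<in> Gamma R"
  unfolding Gamma_def by (auto intro: gg_gen)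

lemma diag_pow:
  fixes K :: "real^2^2"
  assumes K: "K \<in> Gamma R" "K$1$2 = 0" "K$2$1 = 0"
  shows "mat2 (K$1$1 ^ n) 0 0 (K$2$2 ^ n) \<in> Gamma R"
proof (induction n)
  case 0
  have "mat2 1 0 0 1 = (mat 1 :: real^2^2)" by (simp add: mat_eq)
  then show ?case by (simp add: Gamma_def gen_group.one)
next
  case (Suc n)
  have "K ** mat2 (K$1$1 ^ n) 0 0 (K$2$2 ^ n) = mat2 (K$1$1 ^ Suc n) 0 0 (K$2$2 ^ Suc n)"
    using K by (simp add: mat_eq mm_ent)
  then show ?case using Gamma_mult[OF K(1) Suc] by simp
qed

lemma stab:
  assumes g: "\<delta> \<in> Gamma R" and fx: "gact \<delta> e0 = e0"
  shows "\<delta> = mat 1 \<or> \<delta> = - mat 1"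
proof -
  have d: "\<delta>$1$1 * \<delta>$2$2 - \<delta>$1$2 * \<delta>$2$1 = 1" using Gamma_det[OF g] by (simp add: det2)
  have f1: "bact \<delta> Inf = Inf" and f2: "bact \<delta> (Fin 0) = Fin 0" using fx by (auto simp: gact_def e0_def)
  have c0: "\<delta>$2$1 = 0" using f1 by (auto simp: bact_def split: if_splits)
  have ad: "\<delta>$1$1 * \<delta>$2$2 = 1" using d c0 by simp
  then have d0: "\<delta>$2$2 \<noteq> 0" by auto
  have b0: "\<delta>$1$2 = 0" using f2 d0 by (auto simp: bact_def split: if_splits)
  show ?thesis
  proof (cases "(\<delta>$1$1)^2 = 1")
    case True
    then have "\<delta>$1$1 = 1 \<or> \<delta>$1$1 = -1" by (simp add: power2_eq_1_iff)
    then show ?thesis using ad b0 c0 by (auto simp: mat_eq)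
  next
    case False
    obtain K where K: "K \<in> Gamma R" "K$1$2 = 0" "K$2$1 = 0" "K$1$1 * K$2$2 = 1" "(K$1$1)^2 > 1"
    proof (cases "(\<delta>$1$1)^2 > 1")
      case True then show ?thesis using that[of \<delta>] g b0 c0 ad by simp
    next
      case F: False
      have "(\<delta>$2$2)^2 > 1"
      proof -
        have "(\<delta>$1$1)^2 * (\<delta>$2$2)^2 = 1" using ad by (simp add: power_mult_distrib[symmetric])
        moreover have "(\<delta>$1$1)^2 < 1" "(\<delta>$1$1)^2 > 0" using F False ad by (auto simp: not_less)
        ultimately have "(\<delta>$2$2)^2 = 1 / (\<delta>$1$1)^2" by (simp add: field_simps)
        then show ?thesis using \<open>(\<delta>$1$1)^2 < 1\<close> \<open>(\<delta>$1$1)^2 > 0\<close> by (simp add: less_divide_eq)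
      qed
      then show ?thesis using that[of "inv2 \<delta>"] Gamma_inv[OF g] b0 c0 ad by (simp add: mult.commute)
    qed
    define \<kappa> where "\<kappa> = K$1$1"
    define \<kappa>' where "\<kappa>' = K$2$2"
    have kk: "\<kappa> * \<kappa>' = 1" using K(4) by (simp add: \<kappa>_def \<kappa>'_def)
    define \<mu> where "\<mu> = \<kappa>^2"
    have mu: "\<mu> > 1" using K(5) by (simp add: \<mu>_def \<kappa>_def)
    obtain t1 h1 t2 h2 where sh: "side1 R = (Fin t1, Fin h1)" "side2 R = (Fin t2, Fin h2)" "0 < t1" "t1 < h1"
       "0 < t2" "t2 < h2"
      using adm_facts[OF adm] by blast
    define B where "B = max h1 h2"
    obtain n where n: "B / t1 < \<mu>^n" using real_arch_pow[OF mu] by blast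
    define Kn where "Kn = mat2 (\<kappa> ^ n) 0 0 (\<kappa>' ^ n)"
    have Kn: "Kn \<in> Gamma R" unfolding Kn_def \<kappa>_def \<kappa>'_def by (rule diag_pow[OF K(1-3)])
    have kn: "\<kappa>' ^ n \<noteq> 0" using kk by (metis mult_not_zero power_not_zero zero_neq_one)
    have bx: "bact Kn (Fin x) = Fin (\<mu>^n * x)" for x
    proof -
      have "\<kappa>^n * x / \<kappa>'^n = \<mu>^n * x"
      proof -
        have k2: "\<kappa>^2 * \<kappa>' = \<kappa>" using kk by (simp add: power2_eq_square mult.assoc)
        have "\<mu>^n * \<kappa>'^n = (\<kappa>^2 * \<kappa>')^n" by (simp add: \<mu>_def power_mult_distrib)
        then have "\<mu>^n * \<kappa>'^n = \<kappa>^n" using k2 by simp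
        then show ?thesis using kn by (simp add: field_simps)
      qed
      then show ?thesis using kn by (simp add: bact_def Kn_def)
    qed
    define g where "g = gact Kn (side1 R)"
    have gv: "g = (Fin (\<mu>^n * t1), Fin (\<mu>^n * h1))" by (simp add: g_def gact_def sh bx)
    have big: "\<mu>^n * t1 > B" using n sh(3) by (simp add: pos_divide_less_eq)
    have "\<mu>^n * t1 < \<mu>^n * h1" using sh(4) mu by (intro mult_strict_left_mono) auto
    then have big2: "\<mu>^n * h1 > B" using big by simp
    have Bb: "h1 \<le> B" "h2 \<le> B" by (auto simp: B_def)
    have "Inv R g"
    proof -
      have "g = gact (Kn ** R) e0" using dR by (simp add: g_def side1_def gact_mm)
      then show ?thesis using Inv_gamma Gamma_mult[OF Kn R_Gamma(1)] by simp
    qed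
    moreover have "g \<notin> sides6 R"
      using big Bb sh by (auto simp: sides6_def gv e0_def)
    moreover have "\<not> xi R g"
    proof
      assume "xi R g"
      then have "bleft (prod.swap e0) (fst g)" using loc by (simp add: ends_in_def)
      then show False using big Bb sh by (simp add: gv bleft_e0)
    qed
    moreover have "\<not> xr R g"
    proof
      assume "xr R g"
      then obtain S where S: "S \<in> {side1 R, side2 R}" "bleft (prod.swap S) (fst g)"
        using loc unfolding ends_in_def by blast
      obtain t h where tS: "sideS S t h" using sideS_ex[OF S(1)] by blast
      obtain y where y: "fst g = Fin y" "t < y" "y < h" using sideS.A_fin[OF tS S(2)] by blast
      have "h \<le> B" using S(1) tS sh Bb by (auto simp: sideS_def)
      then show False using y big by (simp add: gv)
    qed
    ultimately show ?thesis by (simp add: Inv_def)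
  qed
qed

end


lemma bact_inv: "det \<gamma> = 1 \<Longrightarrow> bact \<gamma> (bact (inv2 \<gamma>) \<xi>) = \<xi>"
  by (metis bact_mm bact_one det_inv2 mm_inv2 zero_neq_one)

lemma bact_inv': "det \<gamma> = 1 \<Longrightarrow> bact (inv2 \<gamma>) (bact \<gamma> \<xi>) = \<xi>"
  by (metis bact_mm bact_one inv2_mm_l zero_neq_one)

lemma gact_inv: "det \<gamma> = 1 \<Longrightarrow> gact \<gamma> (gact (inv2 \<gamma>) g) = g"
  by (simp add: gact_def bact_inv)

lemma gact_inv': "det \<gamma> = 1 \<Longrightarrow> gact (inv2 \<gamma>) (gact \<gamma> g) = g"
  by (simp add: gact_def bact_inv')

lemma gact_inj: "det \<gamma> = 1 \<Longrightarrow> gact \<gamma> a = gact \<gamma> b \<Longrightarrow> a = b"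
  by (metis gact_inv')

lemma bleft_pull: "det \<gamma> = 1 \<Longrightarrow> bleft (gact \<gamma> g) \<xi> \<longleftrightarrow> bleft g (bact (inv2 \<gamma>) \<xi>)"
  by (metis bact_inv bleft_gact zero_less_one)

lemma bleft_push: "det \<gamma> = 1 \<Longrightarrow> bleft g \<eta> \<Longrightarrow> bleft (gact \<gamma> g) (bact \<gamma> \<eta>)"
  by (simp add: bleft_gact)

lemma fst_gact: "fst (gact M g) = bact M (fst g)" and snd_gact: "snd (gact M g) = bact M (snd g)"
  by (simp_all add: gact_def)

lemma geod_lside_disj: "z \<in> geod g \<Longrightarrow> z \<notin> lside g"
  by (auto simp: geod_bv lside_bv FF_def)

lemma lside_FF_neg: "z \<in> lside (prod.swap g) \<Longrightarrow> FF (bv (fst g)) (bv (snd g)) z < 0"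
  using FF_swap[of "bv (snd g)" "bv (fst g)" z] by (simp add: lside_bv)

lemma pos_nn: "pos c z \<ge> 0"
  by (cases c) (auto simp: pos_def split: bpt.splits)

lemma oleaf_form:
  assumes adm: "admissible_R R" and L: "L \<in> oleaves R"
  shows "\<exists>\<delta> \<in> Gamma R. L = gact \<delta> e0"
proof -
  have dR': "det R = 1" using adm by (simp add: admissible_R_def)
  have base: "\<exists>\<delta> \<in> Gamma R. gact g s = gact \<delta> e0 \<and> prod.swap (gact g s) = gact (\<delta> ** Imat) e0"
    if g: "g \<in> Gamma R" and s: "s \<in> {e0, side1 R, side2 R}" for g s
  proof -
    have dg: "det g = 1" using Gamma_det[OF adm g] .
    have sw: "prod.swap (gact \<delta> e0) = gact (\<delta> ** Imat) e0" for \<delta>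
      by (simp add: gact_mm Imat_det gact_I_e0 gact_swap)
    from s consider "s = e0" | "s = side1 R" | "s = side2 R" by blast
    then have "\<exists>\<delta> \<in> Gamma R. gact g s = gact \<delta> e0"
    proof cases
      case 1 then show ?thesis using g by blast
    next
      case 2 then show ?thesis using Gamma_mult[OF adm g R_Gamma(1)[OF adm]] dR'
        by (intro bexI[of _ "g ** R"]) (simp_all add: side1_def gact_mm)
    next
      case 3 then show ?thesis using Gamma_mult[OF adm g Gamma_mult[OF adm R_Gamma(1)[OF adm] R_Gamma(1)[OF adm]]] dR'
        by (intro bexI[of _ "g ** (R ** R)"]) (simp_all add: side2_def gact_mm det_mul)
    qed
    then show ?thesis using sw by metis
  qed
  from L consider g s where "g \<in> Gamma R" "s \<in> {e0, side1 R, side2 R}" "L = gact g s"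
    | g s where "g \<in> Gamma R" "s \<in> {e0, side1 R, side2 R}" "L = prod.swap (gact g s)"
    unfolding oleaves_def by blast
  then show ?thesis
  proof cases
    case 1 then show ?thesis using base by metis
  next
    case 2 then show ?thesis using base Gamma_mult[OF adm _ R_Gamma(2)[OF adm]] by metis
  qed
qed

lemma swap_side_oleaf:
  assumes "\<gamma> \<in> Gamma R" "S \<in> {side1 R, side2 R}"
  shows "prod.swap (gact \<gamma> S) \<in> oleaves R"
  using assms unfolding oleaves_def by blast


section \<open>The crossing sequence\<close>

lemma crosses_iff: "crosses_RL c L \<longleftrightarrow> bleft L (snd c) \<and> bleft (prod.swap L) (fst c)"
  by (cases L) (simp add: crosses_RL_def)

locale LS =
  fixes R :: "real^2^2" and c :: ogeod and l :: "int \<Rightarrow> ogeod"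
  assumes adm: "admissible_R R"
    and rng: "range l = {m \<in> oleaves R. crosses_RL c m}"
    and ord: "\<forall>m k z w. m < k \<longrightarrow> z \<in> geod c \<inter> geod (l m) \<longrightarrow> w \<in> geod c \<inter> geod (l k)
            \<longrightarrow> pos c z < pos c w"
begin

lemma lm: "l m \<in> oleaves R" "crosses_RL c (l m)"
  using rng by auto

lemma in_range: "L \<in> oleaves R \<Longrightarrow> crosses_RL c L \<Longrightarrow> \<exists>k. l k = L"
  using rng by (metis (mono_tags, lifting) mem_Collect_eq rangeE)

lemma meet: "crosses_RL c L \<Longrightarrow> \<exists>z. z \<in> geod c \<and> z \<in> geod L"
  by (rule cross_meet) (auto simp: crosses_iff)

lemma ordl: "m < k \<Longrightarrow> z \<in> geod c \<Longrightarrow> z \<in> geod (l m) \<Longrightarrow> w \<in> geod c \<Longrightarrow> w \<in> geod (l k) \<Longrightarrow> pos c z < pos c w"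
  using ord by blast

lemma c_ne: "fst c \<noteq> snd c"
proof
  assume e: "fst c = snd c"
  have "bleft (l 0) (snd c)" "bleft (prod.swap (l 0)) (fst c)" using lm(2) by (auto simp: crosses_iff)
  then show False using e bleft_excl by metis
qed

lemma linj: "l m = l k \<Longrightarrow> m = k"
proof (rule ccontr)
  assume e: "l m = l k" and ne: "m \<noteq> k"
  obtain z where z: "z \<in> geod c" "z \<in> geod (l m)" using meet[OF lm(2)] by blast
  show False
  proof (cases "m < k")
    case True then show False using ordl[OF True z] z e by fastforce
  next
    case False then have "k < m" using ne by simp
    then show False using ordl[of k m z z] z e by fastforce
  qed
qed

lemma FF_c: 
  assumes z: "z \<in> geod c"
  shows "\<exists>K>0. FF u v z = K * (dt v u * dt u (bv (fst c)) * dt v (bv (fst c))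
                + dt v u * dt u (bv (snd c)) * dt v (bv (snd c)) * (pos c z)^2)"
  by (rule FF_along[OF z c_ne])

lemma POS:
  assumes cr: "crosses_RL c L" and z: "z \<in> geod c" "z \<in> geod L" and w: "w \<in> geod c"
  shows "w \<in> lside L \<Longrightarrow> pos c z < pos c w" and "w \<in> lside (prod.swap L) \<Longrightarrow> pos c w < pos c z"
proof -
  define u where "u = bv (fst L)"
  define v where "v = bv (snd L)"
  define A where "A = dt v u * dt u (bv (fst c)) * dt v (bv (fst c))"
  define B where "B = dt v u * dt u (bv (snd c)) * dt v (bv (snd c))"
  have Bp: "B > 0" using cr by (simp add: crosses_iff bleft_bv bl_def B_def u_def v_def)
  obtain K1 where K1: "K1 > 0" "FF u v z = K1 * (A + B * (pos c z)^2)" using FF_c[OF z(1)] A_def B_def by blast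
  obtain K2 where K2: "K2 > 0" "FF u v w = K2 * (A + B * (pos c w)^2)" using FF_c[OF w] A_def B_def by blast
  have "FF u v z = 0" using z(2) by (simp add: geod_bv FF_def u_def v_def)
  then have z0: "A + B * (pos c z)^2 = 0" using K1 by simp
  have pz: "pos c z \<ge> 0" "pos c w \<ge> 0" by (rule pos_nn)+
  show "w \<in> lside L \<Longrightarrow> pos c z < pos c w"
  proof -
    assume "w \<in> lside L"
    then have "FF u v w > 0" by (simp add: lside_bv u_def v_def)
    then have "A + B * (pos c w)^2 > 0" using K2 by (simp add: zero_less_mult_iff)
    then have "B * (pos c z)^2 < B * (pos c w)^2" using z0 by linarith
    then have "(pos c z)^2 < (pos c w)^2" using Bp by simp
    then show ?thesis using pz by (simp add: power_less_imp_less_base)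
  qed
  show "w \<in> lside (prod.swap L) \<Longrightarrow> pos c w < pos c z"
  proof -
    assume "w \<in> lside (prod.swap L)"
    then have "FF u v w < 0" using lside_FF_neg u_def v_def by blast
    then have "A + B * (pos c w)^2 < 0" using K2 by (simp add: mult_less_0_iff)
    then have "B * (pos c w)^2 < B * (pos c z)^2" using z0 by linarith
    then have "(pos c w)^2 < (pos c z)^2" using Bp by simp
    then show ?thesis using pz by (simp add: power_less_imp_less_base)
  qed
qed

lemma POS2:
  assumes z: "z \<in> geod c" "z \<in> lside T" and w: "w \<in> geod c" "w \<in> lside (prod.swap T)"
    and zw: "pos c z < pos c w"
  shows "bleft (prod.swap T) (snd c)"
proof -
  define u where "u = bv (fst T)"
  define v where "v = bv (snd T)"
  define A where "A = dt v u * dt u (bv (fst c)) * dt v (bv (fst c))"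
  define B where "B = dt v u * dt u (bv (snd c)) * dt v (bv (snd c))"
  obtain K1 where K1: "K1 > 0" "FF u v z = K1 * (A + B * (pos c z)^2)" using FF_c[OF z(1)] A_def B_def by blast
  obtain K2 where K2: "K2 > 0" "FF u v w = K2 * (A + B * (pos c w)^2)" using FF_c[OF w(1)] A_def B_def by blast
  have "FF u v z > 0" using z(2) by (simp add: lside_bv u_def v_def)
  then have a: "A + B * (pos c z)^2 > 0" using K1 by (simp add: zero_less_mult_iff)
  have "FF u v w < 0" using w(2) lside_FF_neg u_def v_def by blast
  then have b: "A + B * (pos c w)^2 < 0" using K2 by (simp add: mult_less_0_iff)
  have pz: "pos c z \<ge> 0" by (rule pos_nn)
  have sq: "(pos c z)^2 < (pos c w)^2" using zw pz by (intro power_strict_mono) auto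
  have "B * ((pos c w)^2 - (pos c z)^2) < 0" using a b by (simp add: algebra_simps)
  then have "B < 0" using sq by (simp add: mult_less_0_iff)
  then show ?thesis using dt_swap[of u v] by (simp add: bleft_bv bl_def B_def u_def v_def algebra_simps)
qed

lemma step:
  assumes g: "\<gamma> \<in> Gamma R" and L0: "l m = gact \<gamma> e0"
  shows "\<exists>S \<in> {side1 R, side2 R}. l (m+1) = gact \<gamma> (prod.swap S)"
proof -
  have dg: "det \<gamma> = 1" by (rule Gamma_det[OF adm g])
  obtain \<delta> where \<delta>: "\<delta> \<in> Gamma R" "l (m+1) = gact \<delta> e0" using oleaf_form[OF adm lm(1)] by blast
  define g' where "g' = gact (inv2 \<gamma> ** \<delta>) e0"
  have Ig: "Inv R g'" unfolding g'_def
    by (rule Inv_gamma[OF adm Gamma_mult[OF adm Gamma_inv[OF adm g] \<delta>(1)]])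
  have L1: "l (m+1) = gact \<gamma> g'"
    using dg Gamma_det[OF adm \<delta>(1)] unfolding g'_def \<delta>(2)
    by (simp add: gact_mm det_inv2 gact_inv)
  have cr0: "crosses_RL c (l m)" and cr1: "crosses_RL c (l (m+1))" by (rule lm(2))+
  define \<xi>t where "\<xi>t = bact (inv2 \<gamma>) (fst c)"
  have ft: "fst c = bact \<gamma> \<xi>t" using dg by (simp add: \<xi>t_def bact_inv)
  have sw0: "prod.swap (l m) = gact \<gamma> (prod.swap e0)" by (simp add: L0 gact_swap)
  have ht: "bleft (prod.swap e0) \<xi>t"
    using cr0 bleft_pull[OF dg, of "prod.swap e0" "fst c"] by (simp add: crosses_iff sw0 \<xi>t_def)
  obtain z where z: "z \<in> geod c" "z \<in> geod (l m)" using meet[OF cr0] by blast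
  obtain w where w: "w \<in> geod c" "w \<in> geod (l (m+1))" using meet[OF cr1] by blast
  have zw: "pos c z < pos c w" using ordl[of m "m+1"] z w by simp
  have ends_push: "bleft G (fst g') \<Longrightarrow> bleft G (snd g') \<Longrightarrow>
      bleft (gact \<gamma> G) (fst (l (m+1))) \<and> bleft (gact \<gamma> G) (snd (l (m+1)))" for G
    using dg by (simp add: L1 fst_gact snd_gact bleft_push)
  from Ig consider "g' = e0" | "g' = prod.swap e0" | "g' \<in> {side1 R, side2 R}"
     | "g' \<in> prod.swap ` {side1 R, side2 R}" | "xi R g'" | "xr R g'"
    unfolding Inv_def sides6_def by blast
  then show ?thesis
  proof cases
    case 1
    then have "l (m+1) = l m" using L0 L1 by simp
    then show ?thesis using linj by fastforce
  next
    case 2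
    then have "l (m+1) = prod.swap (l m)" using L0 L1 by (simp add: gact_swap)
    then show ?thesis using cr0 cr1 bleft_excl by (metis crosses_iff)
  next
    case 3
    then obtain t h where tS: "sideS g' t h" using sideS_ex[OF adm] by blast
    have "bleft (gact \<gamma> (prod.swap g')) (fst c)" using cr1 by (simp add: crosses_iff L1 gact_swap)
    then have "bleft (prod.swap g') \<xi>t" using bleft_pull[OF dg] by (simp add: \<xi>t_def)
    then have "bleft e0 \<xi>t" by (rule sideS.A_P[OF tS])
    then show ?thesis using ht bleft_excl by blast
  next
    case 4
    then obtain S where "S \<in> {side1 R, side2 R}" "g' = prod.swap S" by blast
    then show ?thesis using L1 by blast
  next
    case 5
    then have e: "bleft (prod.swap e0) (fst g')" "bleft (prod.swap e0) (snd g')"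
      using loc[OF adm] by (auto simp: ends_in_def)
    have "w \<in> lside (prod.swap (l m))"
      using ends_push[OF e] geod_in_lside[OF w(2)] sw0 by simp
    then have "pos c w < pos c z" using POS(2)[OF cr0 z w(1)] by blast
    then show ?thesis using zw by simp
  next
    case 6
    then obtain S where S: "S \<in> {side1 R, side2 R}" "ends_in (bleft (prod.swap S)) g'"
      using loc[OF adm] by blast
    obtain t h where tS: "sideS S t h" using sideS_ex[OF adm S(1)] by blast
    define T where "T = gact \<gamma> S"
    have swT: "prod.swap T = gact \<gamma> (prod.swap S)" by (simp add: T_def gact_swap)
    have wT: "w \<in> lside (prod.swap T)"
      using ends_push[of "prod.swap S"] S(2) geod_in_lside[OF w(2)] swT by (simp add: ends_in_def)
    have zT: "z \<in> lside T"
    proof -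
      have "bleft T (fst (l m))" "bleft T (snd (l m))"
        using sideS.e0_left[OF tS] bleft_push[OF dg] by (simp_all add: T_def L0 gact_def)
      then show ?thesis using geod_in_lside[OF z(2)] by blast
    qed
    have hT: "bleft (prod.swap T) (snd c)" by (rule POS2[OF z(1) zT w(1) wT zw])
    have tT: "bleft T (fst c)"
      using sideS.A0_left[OF tS ht] bleft_push[OF dg] ft by (simp add: T_def)
    have crT: "crosses_RL c (prod.swap T)" using hT tT by (simp add: crosses_iff)
    have olT: "prod.swap T \<in> oleaves R" unfolding T_def by (rule swap_side_oleaf[OF g S(1)])
    obtain k where k: "l k = prod.swap T" using in_range[OF olT crT] by blast
    obtain s where s: "s \<in> geod c" "s \<in> geod (l k)" using meet[OF lm(2)[of k]] by blast
    have sL0: "s \<in> lside (l m)"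
    proof -
      have "bleft (l m) (fst T)" "bleft (l m) (snd T)"
        using sideS.ends_P[OF tS] bleft_push[OF dg] by (simp_all add: T_def L0 gact_def)
      moreover have "s \<in> geod T" using s(2) k geod_swap by metis
      ultimately show ?thesis using geod_in_lside by blast
    qed
    have zs: "pos c z < pos c s" using POS(1)[OF cr0 z s(1) sL0] .
    have sw: "pos c s < pos c w" using POS(1)[OF lm(2)[of k] s w(1)] wT k by simp
    consider "k < m" | "k = m" | "k = m + 1" | "k > m + 1" by linarith
    then show ?thesis
    proof cases
      case 1 then show ?thesis using ordl[OF 1 s z] zs by simp
    next
      case 2 then show ?thesis using sL0 s(2) geod_lside_disj by blast
    next
      case 3 then show ?thesis using k swT S(1) by auto
    next
      case 4 then show ?thesis using ordl[OF 4 w s] sw by simp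
    qed
  qed
qed

end

lemma I_I: "Imat ** (Imat ** Y) = - Y" for Y :: "real^2^2"
  by (simp add: matrix_mul_assoc Imat_sq neg_mm)

context
  fixes R :: "real^2^2"
  assumes adm: "admissible_R R"
begin

lemma Go_mult: "a \<in> Gamma_o R \<Longrightarrow> b \<in> Gamma_o R \<Longrightarrow> a ** b \<in> Gamma_o R"
  unfolding Gamma_o_def by (rule gg_mult)

lemma Go_inv: "a \<in> Gamma_o R \<Longrightarrow> inv2 a \<in> Gamma_o R"
  unfolding Gamma_o_def by (rule gg_inv) (auto intro: gg_gen)

lemma Go_gens: "R \<in> Gamma_o R" "Imat ** R ** Imat \<in> Gamma_o R"
  unfolding Gamma_o_def by (auto intro: gg_gen)

lemma Go_sub: "a \<in> Gamma_o R \<Longrightarrow> a \<in> Gamma R"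
  unfolding Gamma_o_def
proof (induction a rule: gen_group.induct)
  case one then show ?case by (simp add: Gamma_def gen_group.one)
next
  case (step s M)
  have J: "Imat ** R ** Imat \<in> Gamma R"
    using Gamma_mult[OF adm Gamma_mult[OF adm R_Gamma(2)[OF adm] R_Gamma(1)[OF adm]] R_Gamma(2)[OF adm]] .
  have "s \<in> Gamma R" using step(1) J Gamma_inv[OF adm] R_Gamma[OF adm] by auto
  then show ?case using Gamma_mult[OF adm _ step(3)] by simp
qed

lemma mone_Go: "- mat 1 \<in> Gamma_o R"
proof -
  define J where "J = Imat ** R ** Imat"
  have J: "J \<in> Gamma_o R" using Go_gens by (simp add: J_def)
  have R3: "R ** R ** R \<in> Gamma_o R" using Go_mult Go_gens by blast
  have J3: "J ** J ** J \<in> Gamma_o R" using Go_mult J by blast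
  have e: "J ** J ** J = Imat ** (R ** R ** R) ** Imat"
    by (simp add: J_def matrix_mul_assoc[symmetric] I_I neg_mm)
  from R_cube[OF adm] show ?thesis
  proof
    assume "R ** R ** R = mat 1"
    then have "J ** J ** J = - mat 1" using e by (simp add: Imat_sq)
    then show ?thesis using J3 by simp
  next
    assume "R ** R ** R = - mat 1"
    then show ?thesis using R3 by simp
  qed
qed

lemma Go_neg: "a \<in> Gamma_o R \<Longrightarrow> - a \<in> Gamma_o R"
  using Go_mult[OF mone_Go] by (simp add: neg_mm)

lemma W_Go: "w \<in> Wset R \<Longrightarrow> w \<in> Gamma_o R"
proof -
  assume w: "w \<in> Wset R"
  define J where "J = Imat ** R ** Imat"
  have J: "J \<in> Gamma_o R" using Go_gens by (simp add: J_def)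
  have R2: "R ** R \<in> Gamma_o R" using Go_mult Go_gens by blast
  have JJ: "Imat ** (R ** R) ** Imat = - (J ** J)"
    by (simp add: J_def matrix_mul_assoc[symmetric] I_I neg_mm)
  have JJ': "- (J ** J) \<in> Gamma_o R" using Go_neg Go_mult J by blast
  have "R ** Imat ** R ** Imat = R ** J" by (simp add: J_def matrix_mul_assoc)
  moreover have "R ** Imat ** (R ** R) ** Imat = R ** (Imat ** (R ** R) ** Imat)" by (simp add: matrix_mul_assoc)
  moreover have "(R ** R) ** Imat ** (R ** R) ** Imat = (R ** R) ** (Imat ** (R ** R) ** Imat)" by (simp add: matrix_mul_assoc)
  moreover have "(R ** R) ** Imat ** R ** Imat = (R ** R) ** J" by (simp add: J_def matrix_mul_assoc)
  ultimately show ?thesis using w Go_mult[OF Go_gens(1) J] Go_mult[OF R2 J]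
      Go_mult[OF Go_gens(1) JJ'] Go_mult[OF R2 JJ'] JJ unfolding Wset_def by auto
qed

lemma uniq: "a \<in> Gamma R \<Longrightarrow> b \<in> Gamma R \<Longrightarrow> gact a e0 = gact b e0 \<Longrightarrow> b = a \<or> b = - a"
proof -
  assume a: "a \<in> Gamma R" and b: "b \<in> Gamma R" and e: "gact a e0 = gact b e0"
  have da: "det a = 1" using Gamma_det[OF adm a] .
  have db: "det b = 1" using Gamma_det[OF adm b] .
  define h where "h = inv2 a ** b"
  have h: "h \<in> Gamma R" unfolding h_def using Gamma_mult[OF adm Gamma_inv[OF adm a] b] .
  have "gact h e0 = gact (inv2 a) (gact a e0)" unfolding h_def e using db by (simp add: gact_mm)
  also have "\<dots> = e0" using da by (simp add: gact_inv')
  finally have "h = mat 1 \<or> h = - mat 1" using stab[OF adm h] by blast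
  moreover have "b = a ** h" unfolding h_def using da by (simp add: matrix_mul_assoc mm_inv2)
  ultimately show ?thesis by (auto simp: neg_mm)
qed

end

lemma swap_side_mat: "det R = 1 \<Longrightarrow> prod.swap (side1 R) = gact (R ** Imat) e0"
    "det R = 1 \<Longrightarrow> prod.swap (side2 R) = gact ((R ** R) ** Imat) e0"
  by (simp_all add: side1_def side2_def gact_mm Imat_det gact_I_e0 gact_swap)

context LS
begin

lemma twostep:
  assumes g: "\<gamma> \<in> Gamma R" and L0: "l k = gact \<gamma> e0"
  shows "\<exists>w \<in> Wset R. l (k + 2) = gact (\<gamma> ** w) e0"
proof -
  have dR': "det R = 1" using dR[OF adm] .
  have dI: "det Imat = 1" by (rule Imat_det)
  have one: "\<exists>M \<in> {R, R ** R}. l (j+1) = gact (\<delta> ** M ** Imat) e0"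
    if d: "\<delta> \<in> Gamma R" "l j = gact \<delta> e0" for \<delta> j
  proof -
    obtain S where S: "S \<in> {side1 R, side2 R}" "l (j+1) = gact \<delta> (prod.swap S)" using step[OF d] by blast
    have dd: "det (M ** Imat) = 1" if "M \<in> {R, R ** R}" for M using that dR' dI by (auto simp: det_mul)
    have gm: "gact \<delta> (gact (M ** Imat) e0) = gact (\<delta> ** M ** Imat) e0" if "M \<in> {R, R ** R}" for M
      using gact_mm[of "M ** Imat" \<delta> e0] dd[OF that] by (simp add: matrix_mul_assoc)
    from S(1) show ?thesis
    proof
      assume "S = side1 R"
      then show ?thesis using S(2) swap_side_mat(1)[OF dR'] gm[of R] by auto
    next
      assume "S \<in> {side2 R}"
      then show ?thesis using S(2) swap_side_mat(2)[OF dR'] gm[of "R ** R"] by auto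
    qed
  qed
  obtain Ma where Ma: "Ma \<in> {R, R ** R}" "l (k+1) = gact (\<gamma> ** Ma ** Imat) e0" using one[OF g L0] by blast
  have g1: "\<gamma> ** Ma ** Imat \<in> Gamma R"
    using Ma(1) g Gamma_mult[OF adm] R_Gamma[OF adm] by auto
  obtain Mb where Mb: "Mb \<in> {R, R ** R}" "l (k+1+1) = gact (\<gamma> ** Ma ** Imat ** Mb ** Imat) e0" using one[OF g1 Ma(2)] by blast
  have "\<gamma> ** Ma ** Imat ** Mb ** Imat = \<gamma> ** (Ma ** Imat ** Mb ** Imat)" by (simp add: matrix_mul_assoc)
  moreover have "Ma ** Imat ** Mb ** Imat \<in> Wset R" using Ma(1) Mb(1) by (auto simp: Wset_def)
  moreover have "k + 1 + 1 = k + 2" by simp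
  ultimately show ?thesis using Mb(2) by metis
qed

end

theorem lemma9p1:
  fixes R :: "real^2^2" and c :: ogeod and l :: "int \<Rightarrow> ogeod"
  assumes "admissible_R R"
    and "fst c \<noteq> snd c"
    and "fst c \<in> limset (Gamma_o R)" and "snd c \<in> limset (Gamma_o R)"
    and "range l = {m \<in> oleaves R. crosses_RL c m}"
    and "\<forall>m k z w. m < k \<longrightarrow> z \<in> geod c \<inter> geod (l m) \<longrightarrow> w \<in> geod c \<inter> geod (l k)
            \<longrightarrow> pos c z < pos c w"
    and "\<exists>g0 \<in> Gamma_o R. l 0 = gact g0 e0"
  shows "\<forall>n::int.
     (\<exists>g \<in> Gamma_o R. l (2 * n) = gact g e0)
   \<and> (\<forall>g \<in> Gamma_o R. \<forall>g' \<in> Gamma_o R. l (2 * n) = gact g e0 \<longrightarrow> l (2 * n) = gact g' e0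
        \<longrightarrow> psl_eq g g')
   \<and> (\<forall>g \<in> Gamma_o R. \<forall>g' \<in> Gamma_o R. l (2 * n) = gact g e0 \<longrightarrow> l (2 * n + 2) = gact g' e0
        \<longrightarrow> (\<exists>w \<in> Wset R. psl_eq g' (g ** w)))"
proof -
  have adm: "admissible_R R" by (rule assms(1))
  interpret LS R c l using assms(1,5,6) by unfold_locales
  have form: "\<exists>\<delta> \<in> Gamma R. l k = gact \<delta> e0" for k using oleaf_form[OF adm lm(1)] .
  have E: "\<exists>g \<in> Gamma_o R. l (2 * n) = gact g e0" for n
  proof (induction n rule: int_induct[where k=0])
    case base then show ?case using assms(7) by simp
  next
    case (step1 i)
    then obtain g where g: "g \<in> Gamma_o R" "l (2 * i) = gact g e0" by blast
    obtain w where w: "w \<in> Wset R" "l (2 * i + 2) = gact (g ** w) e0" using twostep[OF Go_sub[OF adm g(1)] g(2)] by blast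
    have "g ** w \<in> Gamma_o R" using Go_mult[OF adm g(1) W_Go[OF adm w(1)]] .
    moreover have "2 * (i + 1) = 2 * i + 2" by simp
    ultimately show ?case using w(2) by metis
  next
    case (step2 i)
    then obtain g where g: "g \<in> Gamma_o R" "l (2 * i) = gact g e0" by blast
    obtain \<delta> where d: "\<delta> \<in> Gamma R" "l (2 * (i - 1)) = gact \<delta> e0" using form by blast
    obtain w where w: "w \<in> Wset R" "l (2 * (i - 1) + 2) = gact (\<delta> ** w) e0" using twostep[OF d] by blast
    have wG: "w \<in> Gamma_o R" by (rule W_Go[OF adm w(1)])
    have dw: "det w = 1" using Gamma_det[OF adm Go_sub[OF adm wG]] .
    have "2 * (i - 1) + 2 = 2 * i" by simp
    then have eq: "gact (\<delta> ** w) e0 = gact g e0" using w(2) g(2) by simp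
    have dwG: "\<delta> ** w \<in> Gamma R" using Gamma_mult[OF adm d(1) Go_sub[OF adm wG]] .
    have "g = \<delta> ** w \<or> g = - (\<delta> ** w)" using uniq[OF adm dwG Go_sub[OF adm g(1)] eq] .
    moreover have "\<delta> = \<delta> ** w ** inv2 w" using dw by (simp add: matrix_mul_assoc[symmetric] mm_inv2)
    ultimately have "\<delta> = g ** inv2 w \<or> \<delta> = - (g ** inv2 w)" by (auto simp: neg_mm)
    then have "gact \<delta> e0 = gact (g ** inv2 w) e0" by (auto simp: gact_neg)
    moreover have "g ** inv2 w \<in> Gamma_o R" using Go_mult[OF adm g(1) Go_inv[OF adm wG]] .
    ultimately show ?case using d(2) by metis
  qed
  show ?thesis
  proof (intro allI conjI ballI impI)
    fix n :: int
    show "\<exists>g \<in> Gamma_o R. l (2 * n) = gact g e0" by (rule E)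
  next
    fix n :: int and g g'
    assume g: "g \<in> Gamma_o R" and g': "g' \<in> Gamma_o R" and e1: "l (2 * n) = gact g e0" and e2: "l (2 * n) = gact g' e0"
    have "g' = g \<or> g' = - g" using uniq[OF adm Go_sub[OF adm g] Go_sub[OF adm g']] e1 e2 by simp
    then show "psl_eq g g'" by (auto simp: psl_eq_def)
  next
    fix n :: int and g g'
    assume g: "g \<in> Gamma_o R" and g': "g' \<in> Gamma_o R" and e1: "l (2 * n) = gact g e0" and e2: "l (2 * n + 2) = gact g' e0"
    obtain w where w: "w \<in> Wset R" "l (2 * n + 2) = gact (g ** w) e0" using twostep[OF Go_sub[OF adm g] e1] by blast
    have gw: "g ** w \<in> Gamma R" using Gamma_mult[OF adm Go_sub[OF adm g] Go_sub[OF adm W_Go[OF adm w(1)]]] .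
    have "g' = g ** w \<or> g' = - (g ** w)" using uniq[OF adm gw Go_sub[OF adm g']] e2 w(2) by simp
    then show "\<exists>w \<in> Wset R. psl_eq g' (g ** w)" using w(1) by (auto simp: psl_eq_def)
  qed
qed


end
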